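(* Let $x_1<x_2$, $u_0\in C^4([x_1,x_2])$, $u_1\in C^3([x_1,x_2])$. For $\tilde\delta,\tilde M>0$ let $\widetilde D_{\tilde\delta}=\{(x,t):0\le t\le\tilde\delta,\ x_1+\frac23t^3\le x\le x_2-\frac23t^3\}$ and let $\mathcal S_{\tilde\delta}^{\tilde M}$ be the class defined in the context. For $\mathbf F=(r,s,w)^T\in\mathcal S_{\tilde\delta}^{\tilde M}$ define $\widetilde{\mathcal T}(\mathbf F)=(R,S,W)^T$ by \[ R(\eta,\xi)=\int_0^\xi\Big(\frac{r(x_+(t),t)-s(x_+(t),t)}{2t}-2t^2\big(u_1'(x_+(t))+u_0''(x_+(t))t\big)\Big)dt, \] \[ S(\eta,\xi)=\int_0^\xi\Big(\frac{s(x_-(t),t)-r(x_-(t),t)}{2t}+2t^2\big(u_1'(x_-(t))-u_0''(x_-(t))t\big)\Big)dt, \] \[ W(\eta,\xi)=-2\int_0^\xi t\big\{r(x_-(t),t)+u_1(x_-(t))\big\}dt, \] where $(\eta,\xi)\in\widetilde D_{\tilde\delta}$ denotes the point $x=\eta$, $t=\xi$, and $x_\pm(t)=\pm\frac23t^3+\eta\mp\frac23\xi^3$. Then there exist positive constants $\tilde\delta\le\sqrt[3]{\frac{3(x_2-x_1)}{4}}$, $\tilde M$ and $0<\tilde\nu<1$, depending only on the $C^4$ norm of $u_0$ and the $C^3$ norm of $u_1$, such that (1) $\widetilde{\mathcal T}$ maps $\mathcal S_{\tilde\delta}^{\tilde M}$ into $\mathcal S_{\tilde\delta}^{\tilde M}$;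 and (2) for all $\mathbf F,\widehat{\mathbf F}\in\mathcal S_{\tilde\delta}^{\tilde M}$, $d(\widetilde{\mathcal T}(\mathbf F),\widetilde{\mathcal T}(\widehat{\mathbf F}))\le\tilde\nu\, d(\mathbf F,\widehat{\mathbf F})$.
   Context: $\mathcal S_{\tilde\delta}^{\tilde M}$ is the set of continuously differentiable vector functions $\mathbf F=(f_1,f_2,f_3)^T:\widetilde D_{\tilde\delta}\to\mathbb R^3$ such that (P1) $\mathbf F(x,0)=\mathbf F_t(x,0)=0$; (P2) $\|\mathbf F(x,t)/t^2\|_\infty\le\tilde M$; (P3) $\|\partial_x\mathbf F(x,t)/t^2\|_\infty\le\tilde M$; (P4) $\partial_x\mathbf F$ is Lipschitz continuous in $x$ and $\|\partial_{xx}\mathbf F(x,t)/t^2\|_\infty\le\tilde M$, where $\|\cdot\|_\infty$ is the supremum norm on $\widetilde D_{\tilde\delta}$. The weighted metric is $d(\mathbf F,\mathbf G)=\|(f_1-g_1)/t^2\|_\infty+\|(f_2-g_2)/t^2\|_\infty+\|(f_3-g_3)/t^2\|_\infty$. *)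

theory Defs
  imports "HOL-Analysis.Analysis"
begin

definition Dom :: "real \<Rightarrow> real \<Rightarrow> real \<Rightarrow> (real \<times> real) set" where
  "Dom x1 x2 \<delta> = {(x, t). 0 \<le> t \<and> t \<le> \<delta> \<and>
                     x1 + 2/3 * t^3 \<le> x \<and> x \<le> x2 - 2/3 * t^3}"

text \<open>u is C^k on [a,b] with derivatives us 0 = u, us 1, ..., us k
  (one-sided derivatives at the endpoints), us k continuous.\<close>
definition Ck_on :: "nat \<Rightarrow> real \<Rightarrow> real \<Rightarrow> (nat \<Rightarrow> real \<Rightarrow> real) \<Rightarrow> bool" where
  "Ck_on k a b us \<longleftrightarrow> continuous_on {a..b} (us k) \<and>
     (\<forall>j<k. \<forall>x\<in>{a..b}. (us j has_real_derivative us (Suc j) x) (at x within {a..b}))"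

definition Ck_norm_le :: "nat \<Rightarrow> real \<Rightarrow> real \<Rightarrow> (nat \<Rightarrow> real \<Rightarrow> real) \<Rightarrow> real \<Rightarrow> bool" where
  "Ck_norm_le k a b us K \<longleftrightarrow> (\<forall>j\<le>k. \<forall>x\<in>{a..b}. \<bar>us j x\<bar> \<le> K)"

text \<open>Scalar version of the class S (a vector function belongs to S iff each of its
  three components does, the sup norm of a vector being the max of its components).
  f x t is the value at the point (x,t); fx, ft are the partial derivatives.\<close>
definition inS1 :: "real \<Rightarrow> real \<Rightarrow> real \<Rightarrow> real \<Rightarrow> (real \<Rightarrow> real \<Rightarrow> real) \<Rightarrow> bool" where
  "inS1 x1 x2 \<delta> M f \<longleftrightarrow>
    (\<exists>fx ft :: real \<times> real \<Rightarrow> real.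
       continuous_on (Dom x1 x2 \<delta>) fx \<and> continuous_on (Dom x1 x2 \<delta>) ft \<and>
       (\<forall>p\<in>Dom x1 x2 \<delta>.
          ((\<lambda>q. f (fst q) (snd q)) has_derivative (\<lambda>h. fx p * fst h + ft p * snd h))
            (at p within Dom x1 x2 \<delta>)) \<and>
       \<comment> \<open>(P1)\<close>
       (\<forall>x. (x, 0) \<in> Dom x1 x2 \<delta> \<longrightarrow> f x 0 = 0 \<and> ft (x, 0) = 0) \<and>
       \<comment> \<open>(P2)\<close>
       (\<forall>(x, t)\<in>Dom x1 x2 \<delta>. \<bar>f x t\<bar> \<le> M * t^2) \<and>
       \<comment> \<open>(P3)\<close>
       (\<forall>(x, t)\<in>Dom x1 x2 \<delta>. \<bar>fx (x, t)\<bar> \<le> M * t^2) \<and>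
       \<comment> \<open>(P4): d_x f Lipschitz in x with constant M t^2 (i.e. |d_xx f| <= M t^2)\<close>
       (\<forall>x y t. (x, t) \<in> Dom x1 x2 \<delta> \<longrightarrow> (y, t) \<in> Dom x1 x2 \<delta> \<longrightarrow>
            \<bar>fx (x, t) - fx (y, t)\<bar> \<le> M * t^2 * \<bar>x - y\<bar>))"

definition inS :: "real \<Rightarrow> real \<Rightarrow> real \<Rightarrow> real \<Rightarrow>
    (real \<Rightarrow> real \<Rightarrow> real) \<Rightarrow> (real \<Rightarrow> real \<Rightarrow> real) \<Rightarrow> (real \<Rightarrow> real \<Rightarrow> real) \<Rightarrow> bool" where
  "inS x1 x2 \<delta> M f1 f2 f3 \<longleftrightarrow> inS1 x1 x2 \<delta> M f1 \<and> inS1 x1 x2 \<delta> M f2 \<and> inS1 x1 x2 \<delta> M f3"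

text \<open>Weighted sup distance of one component: sup over D of |f - g| / t^2
  (at t = 0 the quotient is 0/0 = 0 in HOL, consistent with (P1)).\<close>
definition dist1 :: "real \<Rightarrow> real \<Rightarrow> real \<Rightarrow> (real \<Rightarrow> real \<Rightarrow> real) \<Rightarrow> (real \<Rightarrow> real \<Rightarrow> real) \<Rightarrow> real" where
  "dist1 x1 x2 \<delta> f g = (SUP p\<in>Dom x1 x2 \<delta>. \<bar>f (fst p) (snd p) - g (fst p) (snd p)\<bar> / (snd p)^2)"

definition dS :: "real \<Rightarrow> real \<Rightarrow> real \<Rightarrow>
    (real \<Rightarrow> real \<Rightarrow> real) \<times> (real \<Rightarrow> real \<Rightarrow> real) \<times> (real \<Rightarrow> real \<Rightarrow> real) \<Rightarrow>
    (real \<Rightarrow> real \<Rightarrow> real) \<times> (real \<Rightarrow> real \<Rightarrow> real) \<times> (real \<Rightarrow> real \<Rightarrow> real) \<Rightarrow> real" where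
  "dS x1 x2 \<delta> F G = (case F of (f1, f2, f3) \<Rightarrow> case G of (g1, g2, g3) \<Rightarrow>
      dist1 x1 x2 \<delta> f1 g1 + dist1 x1 x2 \<delta> f2 g2 + dist1 x1 x2 \<delta> f3 g3)"

text \<open>The operator T~. U0 j = j-th derivative of u0, U1 j = j-th derivative of u1.
  x_plus/x_minus are the characteristics through (eta, xi).\<close>
definition x_plus :: "real \<Rightarrow> real \<Rightarrow> real \<Rightarrow> real" where
  "x_plus \<eta> \<xi> t = 2/3 * t^3 + \<eta> - 2/3 * \<xi>^3"

definition x_minus :: "real \<Rightarrow> real \<Rightarrow> real \<Rightarrow> real" where
  "x_minus \<eta> \<xi> t = - 2/3 * t^3 + \<eta> + 2/3 * \<xi>^3"

definition opR :: "(nat \<Rightarrow> real \<Rightarrow> real) \<Rightarrow> (nat \<Rightarrow> real \<Rightarrow> real) \<Rightarrow>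
    (real \<Rightarrow> real \<Rightarrow> real) \<Rightarrow> (real \<Rightarrow> real \<Rightarrow> real) \<Rightarrow> real \<Rightarrow> real \<Rightarrow> real" where
  "opR U0 U1 r s \<eta> \<xi> = integral {0..\<xi>} (\<lambda>t.
      (r (x_plus \<eta> \<xi> t) t - s (x_plus \<eta> \<xi> t) t) / (2 * t)
      - 2 * t^2 * (U1 1 (x_plus \<eta> \<xi> t) + U0 2 (x_plus \<eta> \<xi> t) * t))"

definition opS :: "(nat \<Rightarrow> real \<Rightarrow> real) \<Rightarrow> (nat \<Rightarrow> real \<Rightarrow> real) \<Rightarrow>
    (real \<Rightarrow> real \<Rightarrow> real) \<Rightarrow> (real \<Rightarrow> real \<Rightarrow> real) \<Rightarrow> real \<Rightarrow> real \<Rightarrow> real" where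
  "opS U0 U1 r s \<eta> \<xi> = integral {0..\<xi>} (\<lambda>t.
      (s (x_minus \<eta> \<xi> t) t - r (x_minus \<eta> \<xi> t) t) / (2 * t)
      + 2 * t^2 * (U1 1 (x_minus \<eta> \<xi> t) - U0 2 (x_minus \<eta> \<xi> t) * t))"

definition opW :: "(nat \<Rightarrow> real \<Rightarrow> real) \<Rightarrow> (real \<Rightarrow> real \<Rightarrow> real) \<Rightarrow> real \<Rightarrow> real \<Rightarrow> real" where
  "opW U1 r \<eta> \<xi> = - 2 * integral {0..\<xi>} (\<lambda>t. t * (r (x_minus \<eta> \<xi> t) t + U1 0 (x_minus \<eta> \<xi> t)))"

end

theory Submission
  imports Defs
begin


lemma gen_deriv:
  fixes \<Phi> A B :: "real \<times> real \<Rightarrow> real \<Rightarrow> real" and D :: "(real \<times> real) set"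
  assumes cvx: "convex D" and p: "p \<in> D"
    and der: "\<And>q s. q \<in> D \<Longrightarrow> s \<in> {0..1} \<Longrightarrow>
        ((\<lambda>q. \<Phi> q s) has_derivative (\<lambda>h. A q s * fst h + B q s * snd h)) (at q within D)"
    and cP: "continuous_on (D \<times> {0..1}) (\<lambda>(q, s). \<Phi> q s)"
    and cA: "continuous_on (D \<times> {0..1}) (\<lambda>(q, s). A q s)"
    and cB: "continuous_on (D \<times> {0..1}) (\<lambda>(q, s). B q s)"
  shows "((\<lambda>q. integral {0..1} (\<Phi> q)) has_derivative
     (\<lambda>h. integral {0..1} (A p) * fst h + integral {0..1} (B p) * snd h)) (at p within D)"
proof -
  define L where "L q s = A q s *\<^sub>R (fst_blinfun :: (real \<times> real) \<Rightarrow>\<^sub>L real) + B q s *\<^sub>R snd_blinfun" for q s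
  have Lapp: "blinfun_apply (L q s) h = A q s * fst h + B q s * snd h" for q s h
    by (simp add: L_def blinfun.scaleR_left plus_blinfun.rep_eq fst_blinfun.rep_eq snd_blinfun.rep_eq)
  have Lfun: "blinfun_apply (L q s) = (\<lambda>h. A q s * fst h + B q s * snd h)" for q s
    by (rule ext) (simp add: Lapp)
  have cL: "continuous_on (D \<times> cbox 0 1) (\<lambda>(q, s). L q s)"
  proof -
    have "continuous_on (D \<times> {0..1}) (\<lambda>x. A (fst x) (snd x) *\<^sub>R (fst_blinfun :: (real \<times> real) \<Rightarrow>\<^sub>L real) + B (fst x) (snd x) *\<^sub>R snd_blinfun)"
      using cA cB unfolding split_beta
      by (intro continuous_intros) auto
    then show ?thesis by (simp add: L_def split_beta)
  qed
  have int: "\<Phi> q integrable_on cbox 0 1" if "q \<in> D" for q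
  proof -
    have "continuous_on {0..1} (\<Phi> q)"
      by (rule continuous_on_compose2[OF cP, where f="\<lambda>s. (q, s)", unfolded split_beta fst_conv snd_conv])
         (use that in \<open>auto intro!: continuous_intros\<close>)
    then show ?thesis by (simp add: integrable_continuous_real)
  qed
  have "((\<lambda>q. integral (cbox 0 1) (\<Phi> q)) has_derivative blinfun_apply (integral (cbox 0 1) (L p))) (at p within D)"
    by (rule leibniz_rule[OF _ int cL p cvx]) (use der in \<open>auto simp: Lfun\<close>)
  moreover have "blinfun_apply (integral (cbox 0 1) (L p)) = (\<lambda>h. integral {0..1} (A p) * fst h + integral {0..1} (B p) * snd h)"
  proof
    fix h
    have cA1: "continuous_on {0..1} (A p)"
      by (rule continuous_on_compose2[OF cA, where f="\<lambda>s. (p, s)", unfolded split_beta fst_conv snd_conv])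
         (use p in \<open>auto intro!: continuous_intros\<close>)
    have cB1: "continuous_on {0..1} (B p)"
      by (rule continuous_on_compose2[OF cB, where f="\<lambda>s. (p, s)", unfolded split_beta fst_conv snd_conv])
         (use p in \<open>auto intro!: continuous_intros\<close>)
    have cL1: "continuous_on (cbox 0 1) (L p)"
      by (rule continuous_on_compose2[OF cL, where f="\<lambda>s. (p, s)", unfolded split_beta fst_conv snd_conv])
         (use p in \<open>auto intro!: continuous_intros\<close>)
    have iL: "L p integrable_on cbox 0 1"
      using cL1 by (rule integrable_continuous)
    have "blinfun_apply (integral (cbox 0 1) (L p)) h = integral {0..1} (\<lambda>s. A p s * fst h + B p s * snd h)"
      using blinfun_apply_integral[OF iL] by (simp add: Lapp)
    also have "\<dots> = integral {0..1} (A p) * fst h + integral {0..1} (B p) * snd h"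
      using cA1 cB1 by (simp add: integral_add integrable_continuous_real integrable_on_mult_left)
    finally show "blinfun_apply (integral (cbox 0 1) (L p)) h = integral {0..1} (A p) * fst h + integral {0..1} (B p) * snd h" .
  qed
  ultimately show ?thesis by simp
qed



lemma cont01:
  fixes P :: "real \<times> real \<Rightarrow> real \<Rightarrow> real"
  assumes "continuous_on (D \<times> {0..1}) (\<lambda>(q, s). P q s)" "p \<in> D"
  shows "continuous_on {0..1} (P p)"
  by (rule continuous_on_compose2[OF assms(1), where f="\<lambda>s. (p, s)", unfolded split_beta fst_conv snd_conv])
     (use assms(2) in \<open>auto intro!: continuous_intros\<close>)

lemma bnd_int:
  fixes g :: "real \<Rightarrow> real"
  assumes "continuous_on {0..1} g" "\<And>s. s \<in> {0..1} \<Longrightarrow> \<bar>g s\<bar> \<le> c * s"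
  shows "\<bar>integral {0..1} g\<bar> \<le> c / 2"
proof -
  have "norm (integral {0..1} g) \<le> integral {0..1} (\<lambda>s. c * s)"
  proof (rule integral_norm_bound_integral)
    show "g integrable_on {0..1}" using assms(1) by (rule integrable_continuous_real)
    show "(\<lambda>s. c * s) integrable_on {0..1}"
      by (intro integrable_continuous_real continuous_intros)
    show "norm (g x) \<le> c * x" if "x \<in> {0..1}" for x using assms(2)[OF that] by simp
  qed
  also have "\<dots> = c / 2" by (simp add: integral_mult_right power2_eq_square)
  finally show ?thesis by simp
qed

lemma subst01:
  fixes h :: "real \<Rightarrow> real"
  assumes "0 \<le> \<xi>" "continuous_on {0..1} (\<lambda>s. \<xi> * h (\<xi> * s))"
  shows "integral {0..\<xi>} h = integral {0..1} (\<lambda>s. \<xi> * h (\<xi> * s))"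
proof (cases "\<xi> = 0")
  case True
  then show ?thesis by simp
next
  case False
  with assms have xp: "\<xi> > 0" by simp
  define g where "g s = \<xi> * h (\<xi> * s)" for s
  obtain I where I: "(g has_integral I) (cbox 0 1)"
    using assms(2) integrable_continuous_real unfolding g_def
    by (metis box_real(2) has_integral_integral)
  have "((\<lambda>x. g ((1/\<xi>) *\<^sub>R x + 0)) has_integral (1 / (\<bar>1/\<xi>\<bar> ^ DIM(real))) *\<^sub>R I)
          ((\<lambda>x. (1 / (1/\<xi>)) *\<^sub>R x + -((1 / (1/\<xi>)) *\<^sub>R 0)) ` cbox 0 1)"
    by (rule has_integral_affinity[OF I]) (use xp in auto)
  moreover have "(\<lambda>x. (1 / (1/\<xi>)) *\<^sub>R x + -((1 / (1/\<xi>)) *\<^sub>R 0)) ` cbox 0 1 = {0..\<xi>}"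
    using xp by (auto simp: image_iff intro!: bexI[where x="x/\<xi>" for x])
  moreover have "(\<lambda>x. g ((1/\<xi>) *\<^sub>R x + 0)) = (\<lambda>x. \<xi> * h x)"
    using xp by (auto simp: g_def)
  ultimately have "((\<lambda>x. \<xi> * h x) has_integral \<xi> * I) {0..\<xi>}"
    using xp by simp
  then have "((\<lambda>x. (1/\<xi>) * (\<xi> * h x)) has_integral (1/\<xi>) * (\<xi> * I)) {0..\<xi>}"
    by (rule has_integral_mult_right)
  then have "(h has_integral I) {0..\<xi>}" using xp by simp
  then have e1: "integral {0..\<xi>} h = I" by (rule integral_unique)
  have "integral {0..1} g = I" using I by (metis box_real(2) integral_unique)
  then have "integral {0..1} (\<lambda>s. \<xi> * h (\<xi> * s)) = I" unfolding g_def[abs_def] .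
  with e1 show ?thesis by simp
qed

lemma gen_inS1:
  fixes \<Phi> A B :: "real \<times> real \<Rightarrow> real \<Rightarrow> real" and x1 x2 \<delta> M C :: real
  defines "D \<equiv> Dom x1 x2 \<delta>"
  assumes cvx: "convex D"
    and der: "\<And>q s. q \<in> D \<Longrightarrow> s \<in> {0..1} \<Longrightarrow>
        ((\<lambda>q. \<Phi> q s) has_derivative (\<lambda>h. A q s * fst h + B q s * snd h)) (at q within D)"
    and cP: "continuous_on (D \<times> {0..1}) (\<lambda>(q, s). \<Phi> q s)"
    and cA: "continuous_on (D \<times> {0..1}) (\<lambda>(q, s). A q s)"
    and cB: "continuous_on (D \<times> {0..1}) (\<lambda>(q, s). B q s)"
    and P1: "\<And>x s. (x, 0) \<in> D \<Longrightarrow> s \<in> {0..1} \<Longrightarrow> \<Phi> (x, 0) s = 0 \<and> B (x, 0) s = 0"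
    and P2: "\<And>x t s. (x, t) \<in> D \<Longrightarrow> s \<in> {0..1} \<Longrightarrow> \<bar>\<Phi> (x, t) s\<bar> \<le> C * t^2 * s"
    and P3: "\<And>x t s. (x, t) \<in> D \<Longrightarrow> s \<in> {0..1} \<Longrightarrow> \<bar>A (x, t) s\<bar> \<le> C * t^2 * s"
    and P4: "\<And>x y t s. (x, t) \<in> D \<Longrightarrow> (y, t) \<in> D \<Longrightarrow> s \<in> {0..1} \<Longrightarrow>
               \<bar>A (x, t) s - A (y, t) s\<bar> \<le> C * t^2 * \<bar>x - y\<bar> * s"
    and CM: "C \<le> 2 * M"
  shows "inS1 x1 x2 \<delta> M (\<lambda>\<eta> \<xi>. integral {0..1} (\<Phi> (\<eta>, \<xi>)))"
  unfolding inS1_def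
proof (intro exI conjI)
  let ?fx = "\<lambda>p. integral {0..1} (A p)" and ?ft = "\<lambda>p. integral {0..1} (B p)"
  show "continuous_on (Dom x1 x2 \<delta>) ?fx"
    using integral_continuous_on_param[of D 0 1 A] cA by (simp add: D_def split_beta)
  show "continuous_on (Dom x1 x2 \<delta>) ?ft"
    using integral_continuous_on_param[of D 0 1 B] cB by (simp add: D_def split_beta)
  show "\<forall>p\<in>Dom x1 x2 \<delta>. ((\<lambda>q. integral {0..1} (\<Phi> (fst q, snd q))) has_derivative (\<lambda>h. ?fx p * fst h + ?ft p * snd h)) (at p within Dom x1 x2 \<delta>)"
    using gen_deriv[OF cvx _ der cP cA cB] by (simp add: D_def)
  show "\<forall>x. (x, 0) \<in> Dom x1 x2 \<delta> \<longrightarrow> integral {0..1} (\<Phi> (x, 0)) = 0 \<and> ?ft (x, 0) = 0"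
  proof (intro allI impI conjI)
    fix x assume "(x, 0) \<in> Dom x1 x2 \<delta>"
    then have "\<And>s. s \<in> {0..1} \<Longrightarrow> \<Phi> (x, 0) s = 0 \<and> B (x, 0) s = 0" using P1 D_def by auto
    then show "integral {0..1} (\<Phi> (x, 0)) = 0" "?ft (x, 0) = 0"
      by (auto intro!: integral_unique[OF has_integral_is_0])
  qed
  show "\<forall>(x, t)\<in>Dom x1 x2 \<delta>. \<bar>integral {0..1} (\<Phi> (x, t))\<bar> \<le> M * t^2"
  proof (clarify)
    fix x t assume xt: "(x, t) \<in> Dom x1 x2 \<delta>"
    have "\<bar>integral {0..1} (\<Phi> (x, t))\<bar> \<le> C * t^2 / 2"
      by (rule bnd_int[OF cont01[OF cP]]) (use xt P2 D_def in auto)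
    also have "\<dots> \<le> M * t^2" using mult_right_mono[OF CM zero_le_power2[of t]] by simp
    finally show "\<bar>integral {0..1} (\<Phi> (x, t))\<bar> \<le> M * t^2" .
  qed
  show "\<forall>(x, t)\<in>Dom x1 x2 \<delta>. \<bar>?fx (x, t)\<bar> \<le> M * t^2"
  proof (clarify)
    fix x t assume xt: "(x, t) \<in> Dom x1 x2 \<delta>"
    have "\<bar>?fx (x, t)\<bar> \<le> C * t^2 / 2"
      by (rule bnd_int[OF cont01[OF cA]]) (use xt P3 D_def in auto)
    also have "\<dots> \<le> M * t^2" using mult_right_mono[OF CM zero_le_power2[of t]] by simp
    finally show "\<bar>?fx (x, t)\<bar> \<le> M * t^2" .
  qed
  show "\<forall>x y t. (x, t) \<in> Dom x1 x2 \<delta> \<longrightarrow> (y, t) \<in> Dom x1 x2 \<delta> \<longrightarrow>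
            \<bar>?fx (x, t) - ?fx (y, t)\<bar> \<le> M * t^2 * \<bar>x - y\<bar>"
  proof (intro allI impI)
    fix x y t assume xt: "(x, t) \<in> Dom x1 x2 \<delta>" and yt: "(y, t) \<in> Dom x1 x2 \<delta>"
    have c1: "continuous_on {0..1} (A (x, t))" and c2: "continuous_on {0..1} (A (y, t))"
      using cont01[OF cA] xt yt D_def by auto
    have "?fx (x, t) - ?fx (y, t) = integral {0..1} (\<lambda>s. A (x, t) s - A (y, t) s)"
      using c1 c2 by (simp add: integral_diff integrable_continuous_real)
    moreover have "\<bar>integral {0..1} (\<lambda>s. A (x, t) s - A (y, t) s)\<bar> \<le> C * t^2 * \<bar>x - y\<bar> / 2"
      by (rule bnd_int) (use c1 c2 xt yt P4 D_def in \<open>auto intro!: continuous_intros\<close>)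
    moreover have "C * t^2 * \<bar>x - y\<bar> / 2 \<le> M * t^2 * \<bar>x - y\<bar>"
      using mult_right_mono[OF CM, of "t^2 * \<bar>x - y\<bar>"] by (simp add: mult.assoc)
    ultimately show "\<bar>?fx (x, t) - ?fx (y, t)\<bar> \<le> M * t^2 * \<bar>x - y\<bar>" by linarith
  qed
qed



lemma Dom_mem: "(x, t) \<in> Dom x1 x2 \<delta> \<longleftrightarrow> 0 \<le> t \<and> t \<le> \<delta> \<and> x1 + 2/3 * t^3 \<le> x \<and> x \<le> x2 - 2/3 * t^3"
  by (simp add: Dom_def)

lemma Dom_x: "(x, t) \<in> Dom x1 x2 \<delta> \<Longrightarrow> x \<in> {x1..x2}"
proof -
  assume a: "(x, t) \<in> Dom x1 x2 \<delta>"
  then have "0 \<le> t^3" by (simp add: Dom_mem)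
  moreover have "x1 + 2/3 * t^3 \<le> x" "x \<le> x2 - 2/3 * t^3" using a by (simp_all only: Dom_mem)
  ultimately have "x1 \<le> x" "x \<le> x2" by linarith+
  then show ?thesis by simp
qed

lemma Dom_convex: "convex (Dom x1 x2 \<delta>)"
  unfolding convex_alt
proof (clarify)
  fix x t y u v :: real
  assume xt: "(x, t) \<in> Dom x1 x2 \<delta>" and yu: "(y, u) \<in> Dom x1 x2 \<delta>" and v: "0 \<le> v" "v \<le> 1"
  define T where "T = (1 - v) * t + v * u"
  define X where "X = (1 - v) * x + v * y"
  have c: "T^3 \<le> (1 - v) * t^3 + v * u^3"
    using convex_onD[OF convex_power_odd[of 3], of v t u] xt yu v by (simp add: Dom_mem T_def)
  have h1: "0 \<le> (1 - v) * t" "0 \<le> v * u" using xt yu v by (auto simp: Dom_mem)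
  have h2: "(1 - v) * t \<le> (1 - v) * \<delta>" "v * u \<le> v * \<delta>" using xt yu v by (auto simp: Dom_mem mult_left_mono)
  have h3: "(1 - v) * (x1 + 2/3 * t^3) \<le> (1 - v) * x" "v * (x1 + 2/3 * u^3) \<le> v * y"
    using xt yu v by (auto simp: Dom_mem intro!: mult_left_mono)
  have h4: "(1 - v) * x \<le> (1 - v) * (x2 - 2/3 * t^3)" "v * y \<le> v * (x2 - 2/3 * u^3)"
    using xt yu v by (auto simp: Dom_mem intro!: mult_left_mono)
  have "0 \<le> T" "T \<le> \<delta>" using h1 h2 by (auto simp: T_def algebra_simps)
  moreover have "x1 + 2/3 * T^3 \<le> X"
  proof -
    have "x1 + 2/3 * T^3 \<le> x1 + 2/3 * ((1 - v) * t^3 + v * u^3)" using c by simp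
    also have "\<dots> = (1 - v) * (x1 + 2/3 * t^3) + v * (x1 + 2/3 * u^3)" by (simp add: field_simps)
    also have "\<dots> \<le> (1 - v) * x + v * y" using h3 by (rule add_mono)
    finally show ?thesis by (simp add: X_def)
  qed
  moreover have "X \<le> x2 - 2/3 * T^3"
  proof -
    have "X = (1 - v) * x + v * y" by (simp add: X_def)
    also have "\<dots> \<le> (1 - v) * (x2 - 2/3 * t^3) + v * (x2 - 2/3 * u^3)" using h4 by (rule add_mono)
    also have "\<dots> = x2 - 2/3 * ((1 - v) * t^3 + v * u^3)" by (simp add: field_simps)
    also have "\<dots> \<le> x2 - 2/3 * T^3" using c by simp
    finally show ?thesis .
  qed
  ultimately have "(X, T) \<in> Dom x1 x2 \<delta>" by (simp add: Dom_mem)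
  then show "(1 - v) *\<^sub>R (x, t) + v *\<^sub>R (y, u) \<in> Dom x1 x2 \<delta>" by (simp add: X_def T_def)
qed

lemma cube_le: "0 \<le> (\<xi>::real) \<Longrightarrow> s \<in> {0..1} \<Longrightarrow> (\<xi> * s)^3 \<le> \<xi>^3 \<and> 0 \<le> \<xi> * s \<and> \<xi> * s \<le> \<xi>"
proof -
  assume a: "0 \<le> \<xi>" "s \<in> {0..1}"
  then have "\<xi> * s \<le> \<xi>" "0 \<le> \<xi> * s" using mult_right_le_one_le[of \<xi> s] by auto
  moreover then have "(\<xi> * s)^3 \<le> \<xi>^3" by (intro power_mono) auto
  ultimately show ?thesis by simp
qed

lemma xp_in:
  assumes "(\<eta>, \<xi>) \<in> Dom x1 x2 \<delta>" "s \<in> {0..1}"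
  shows "(x_plus \<eta> \<xi> (\<xi> * s), \<xi> * s) \<in> Dom x1 x2 \<delta>"
proof -
  have "0 \<le> \<xi>" "\<xi> \<le> \<delta>" using assms by (auto simp: Dom_mem)
  then have c: "(\<xi> * s)^3 \<le> \<xi>^3" "0 \<le> \<xi> * s" "\<xi> * s \<le> \<xi>" using cube_le assms(2) by auto
  have "0 \<le> (\<xi> * s)^3" using c by simp
  moreover have "x1 + 2/3 * \<xi>^3 \<le> \<eta>" "\<eta> \<le> x2 - 2/3 * \<xi>^3" using assms(1) by (simp_all only: Dom_mem)
  ultimately show ?thesis using c \<open>\<xi> \<le> \<delta>\<close> unfolding Dom_mem x_plus_def by (intro conjI; linarith)
qed

lemma xm_in:
  assumes "(\<eta>, \<xi>) \<in> Dom x1 x2 \<delta>" "s \<in> {0..1}"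
  shows "(x_minus \<eta> \<xi> (\<xi> * s), \<xi> * s) \<in> Dom x1 x2 \<delta>"
proof -
  have "0 \<le> \<xi>" "\<xi> \<le> \<delta>" using assms by (auto simp: Dom_mem)
  then have c: "(\<xi> * s)^3 \<le> \<xi>^3" "0 \<le> \<xi> * s" "\<xi> * s \<le> \<xi>" using cube_le assms(2) by auto
  have "0 \<le> (\<xi> * s)^3" using c by simp
  moreover have "x1 + 2/3 * \<xi>^3 \<le> \<eta>" "\<eta> \<le> x2 - 2/3 * \<xi>^3" using assms(1) by (simp_all only: Dom_mem)
  ultimately show ?thesis using c \<open>\<xi> \<le> \<delta>\<close> unfolding Dom_mem x_minus_def by (intro conjI; linarith)
qed



lemma cont_div_s:
  fixes k :: "'a::t2_space \<Rightarrow> real \<Rightarrow> real"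
  assumes ck: "continuous_on (S \<times> {0..1}) (\<lambda>(q, s). k q s)"
    and kb: "\<And>q s. q \<in> S \<Longrightarrow> s \<in> {0..1} \<Longrightarrow> \<bar>k q s\<bar> \<le> c * s^2"
  shows "continuous_on (S \<times> {0..1}) (\<lambda>(q, s). k q s / s)"
  unfolding continuous_on_eq_continuous_within
proof (intro ballI)
  fix x :: "'a \<times> real" assume x: "x \<in> S \<times> {0..1}"
  obtain q0 and s0 :: real where xe: "x = (q0, s0)" by (cases x)
  with x have qs0: "(q0, s0) \<in> S \<times> {0..1}" by simp
  let ?T = "S \<times> {0..1::real}"
  have ck0: "((\<lambda>(q, s). k q s) \<longlongrightarrow> k q0 s0) (at (q0, s0) within ?T)"
    using ck qs0 unfolding continuous_on_def by auto
  have sn: "(snd \<longlongrightarrow> s0) (at (q0, s0) within ?T)"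
    using tendsto_snd[OF tendsto_ident_at[of "(q0, s0)" ?T]] by simp
  show "continuous (at x within ?T) (\<lambda>(q, s). k q s / s)"
  proof (cases "s0 = 0")
    case False
    have lim: "((\<lambda>x. (\<lambda>(q, s). k q s) x / snd x) \<longlongrightarrow> k q0 s0 / s0) (at (q0, s0) within ?T)"
      by (rule tendsto_divide[OF ck0 sn False])
    have eq: "(\<lambda>(q, s). k q s / s) = (\<lambda>x. (\<lambda>(q, s). k q s) x / snd x)" by (simp add: fun_eq_iff)
    show ?thesis unfolding continuous_within xe eq using lim by simp
  next
    case True
    have "((\<lambda>(q, s). k q s / s) \<longlongrightarrow> 0) (at (q0, s0) within ?T)"
    proof (rule Lim_null_comparison)
      have pb: "norm ((\<lambda>(q, s). k q s / s) x) \<le> c * snd x" if "x \<in> ?T" for x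
      proof -
        obtain q s where xe: "x = (q, s)" by (cases x)
        with that have q: "q \<in> S" and s: "s \<in> {0..1}" by auto
        show ?thesis
        proof (cases "s = 0")
          case True then show ?thesis by (simp add: xe)
        next
          case False
          with s have sp: "s > 0" by auto
          have "\<bar>k q s\<bar> / s \<le> c * s^2 / s" using kb[OF q s] sp by (simp add: divide_right_mono)
          then show ?thesis using sp by (simp add: xe power2_eq_square)
        qed
      qed
      show "\<forall>\<^sub>F x in at (q0, s0) within ?T. norm ((\<lambda>(q, s). k q s / s) x) \<le> c * snd x"
        unfolding eventually_at_filter using pb by (auto intro!: always_eventually)
      show "((\<lambda>x. c * snd x) \<longlongrightarrow> 0) (at (q0, s0) within ?T)"
        using tendsto_mult[OF tendsto_const[of c] sn] True by simp
    qed
    then show ?thesis unfolding continuous_within xe using True by simp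
  qed
qed

definition Xs :: "real \<Rightarrow> real \<Rightarrow> real \<Rightarrow> real \<Rightarrow> real" where
  "Xs \<sigma> \<eta> \<xi> s = \<eta> + \<sigma> * (2/3 * (\<xi> * s)^3 - 2/3 * \<xi>^3)"

definition Xd :: "real \<Rightarrow> real \<Rightarrow> real \<Rightarrow> real" where
  "Xd \<sigma> \<xi> s = \<sigma> * (2 * \<xi>^2 * s^3 - 2 * \<xi>^2)"

lemma Xs_plus: "x_plus \<eta> \<xi> (\<xi> * s) = Xs 1 \<eta> \<xi> s"
  by (simp add: x_plus_def Xs_def)
lemma Xs_minus: "x_minus \<eta> \<xi> (\<xi> * s) = Xs (-1) \<eta> \<xi> s"
  by (simp add: x_minus_def Xs_def)

lemma Xs_in:
  assumes "\<sigma> = 1 \<or> \<sigma> = -1" "(\<eta>, \<xi>) \<in> Dom x1 x2 \<delta>" "s \<in> {0..1}"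
  shows "(Xs \<sigma> \<eta> \<xi> s, \<xi> * s) \<in> Dom x1 x2 \<delta>"
  using assms xp_in[OF assms(2,3)] xm_in[OF assms(2,3)] by (auto simp: Xs_plus[symmetric] Xs_minus[symmetric])

lemma fst_der: "((\<lambda>x::real\<times>real. fst x) has_derivative (\<lambda>h. fst h)) F"
  by (rule bounded_linear_imp_has_derivative[OF bounded_linear_fst])
lemma snd_der: "((\<lambda>x::real\<times>real. snd x) has_derivative (\<lambda>h. snd h)) F"
  by (rule bounded_linear_imp_has_derivative[OF bounded_linear_snd])

lemma Xs1_der:
  "((\<lambda>q. Xs \<sigma> (fst q) (snd q) s) has_derivative (\<lambda>h. fst h + Xd \<sigma> (snd q) s * snd h)) (at q within D)"
  unfolding Xs_def Xd_def
  apply (rule has_derivative_eq_rhs)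
   apply (rule fst_der snd_der derivative_intros)+
  apply (simp add: fun_eq_iff algebra_simps power2_eq_square power3_eq_cube)
  done

lemma Xs_der:
  "((\<lambda>q. (Xs \<sigma> (fst q) (snd q) s, snd q * s)) has_derivative
     (\<lambda>h. (fst h + Xd \<sigma> (snd q) s * snd h, s * snd h))) (at q within D)"
  apply (rule has_derivative_eq_rhs)
   apply (rule has_derivative_Pair[OF Xs1_der])
   apply (rule fst_der snd_der derivative_intros)+
  apply (simp add: fun_eq_iff)
  done

lemma Xs_cont: "continuous_on UNIV (\<lambda>(q, s). Xs \<sigma> (fst q) (snd q) s)"
  unfolding Xs_def split_beta by (intro continuous_intros)

lemma Xs_lip: "Xs \<sigma> x t s - Xs \<sigma> y t s = x - y"
  by (simp add: Xs_def)

lemma Xs_0: "Xs \<sigma> \<eta> 0 s = \<eta>"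
  by (simp add: Xs_def)



definition PhiS where
  "PhiS f a b \<sigma> q s = f (Xs \<sigma> (fst q) (snd q) s) (snd q * s) / (2 * s)
     + (snd q)^3 * s^2 * (a (Xs \<sigma> (fst q) (snd q) s) + b (Xs \<sigma> (fst q) (snd q) s) * snd q * s)"

definition AS where
  "AS fx a' b' \<sigma> q s = fx (Xs \<sigma> (fst q) (snd q) s, snd q * s) / (2 * s)
     + (snd q)^3 * s^2 * (a' (Xs \<sigma> (fst q) (snd q) s) + b' (Xs \<sigma> (fst q) (snd q) s) * snd q * s)"

definition BS where
  "BS fx ft a b a' b' \<sigma> q s = Xd \<sigma> (snd q) s * AS fx a' b' \<sigma> q s
     + ft (Xs \<sigma> (fst q) (snd q) s, snd q * s) / 2
     + 3 * (snd q)^2 * s^2 * (a (Xs \<sigma> (fst q) (snd q) s) + b (Xs \<sigma> (fst q) (snd q) s) * snd q * s)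
     + (snd q)^3 * s^3 * b (Xs \<sigma> (fst q) (snd q) s)"

lemma comp_f:
  assumes fder: "\<And>p. p \<in> D \<Longrightarrow> ((\<lambda>q. f (fst q) (snd q)) has_derivative (\<lambda>h. fx p * fst h + ft p * snd h)) (at p within D)"
    and mem: "\<And>q. q \<in> D \<Longrightarrow> (Xs \<sigma> (fst q) (snd q) s, snd q * s) \<in> D"
    and q: "q \<in> D"
  shows "((\<lambda>q. f (Xs \<sigma> (fst q) (snd q) s) (snd q * s)) has_derivative
     (\<lambda>h. fx (Xs \<sigma> (fst q) (snd q) s, snd q * s) * (fst h + Xd \<sigma> (snd q) s * snd h)
        + ft (Xs \<sigma> (fst q) (snd q) s, snd q * s) * (s * snd h))) (at q within D)"
proof -
  have img: "(\<lambda>q. (Xs \<sigma> (fst q) (snd q) s, snd q * s)) ` D \<subseteq> D" using mem by auto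
  show ?thesis
    using has_derivative_in_compose2[of D "\<lambda>q. f (fst q) (snd q)" "\<lambda>p h. fx p * fst h + ft p * snd h"
      "\<lambda>q. (Xs \<sigma> (fst q) (snd q) s, snd q * s)" D q, OF fder img q Xs_der]
    by simp
qed

lemma comp_a:
  assumes ader: "\<And>x. x \<in> {x1..x2} \<Longrightarrow> (a has_real_derivative a' x) (at x within {x1..x2})"
    and mem: "\<And>q. q \<in> D \<Longrightarrow> Xs \<sigma> (fst q) (snd q) s \<in> {x1..x2}"
    and q: "q \<in> D"
  shows "((\<lambda>q. a (Xs \<sigma> (fst q) (snd q) s)) has_derivative
     (\<lambda>h. a' (Xs \<sigma> (fst q) (snd q) s) * (fst h + Xd \<sigma> (snd q) s * snd h))) (at q within D)"
proof -
  have img: "(\<lambda>q. Xs \<sigma> (fst q) (snd q) s) ` D \<subseteq> {x1..x2}" using mem by auto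
  have ader': "(a has_derivative (\<lambda>h. a' x * h)) (at x within {x1..x2})" if "x \<in> {x1..x2}" for x
    using ader[OF that] by (simp add: has_field_derivative_def)
  show ?thesis
    by (rule has_derivative_in_compose2[of "{x1..x2}" a "\<lambda>x h. a' x * h"
      "\<lambda>q. Xs \<sigma> (fst q) (snd q) s" D q, OF ader' img q Xs1_der])
qed

lemma PhiS_der:
  assumes fder: "\<And>p. p \<in> D \<Longrightarrow> ((\<lambda>q. f (fst q) (snd q)) has_derivative (\<lambda>h. fx p * fst h + ft p * snd h)) (at p within D)"
    and mem: "\<And>q. q \<in> D \<Longrightarrow> (Xs \<sigma> (fst q) (snd q) s, snd q * s) \<in> D"
    and memx: "\<And>q. q \<in> D \<Longrightarrow> Xs \<sigma> (fst q) (snd q) s \<in> {x1..x2}"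
    and ader: "\<And>x. x \<in> {x1..x2} \<Longrightarrow> (a has_real_derivative a' x) (at x within {x1..x2})"
    and bder: "\<And>x. x \<in> {x1..x2} \<Longrightarrow> (b has_real_derivative b' x) (at x within {x1..x2})"
    and q: "q \<in> D" and s: "s > 0"
  shows "((\<lambda>q. PhiS f a b \<sigma> q s) has_derivative
     (\<lambda>h. AS fx a' b' \<sigma> q s * fst h + BS fx ft a b a' b' \<sigma> q s * snd h)) (at q within D)"
proof -
  have e: "(\<lambda>q. PhiS f a b \<sigma> q s) = (\<lambda>q. f (Xs \<sigma> (fst q) (snd q) s) (snd q * s) * (1 / (2 * s))
     + (snd q)^3 * s^2 * (a (Xs \<sigma> (fst q) (snd q) s) + b (Xs \<sigma> (fst q) (snd q) s) * snd q * s))"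
    by (simp add: PhiS_def fun_eq_iff)
  let ?X = "Xs \<sigma> (fst q) (snd q) s"
  note dF = has_derivative_mult_left[OF comp_f[OF fder mem q], of "1 / (2 * s)"]
  note dA = comp_a[OF ader memx q]
  note dB = has_derivative_mult_left[OF has_derivative_mult[OF comp_a[OF bder memx q] snd_der], of s]
  note dP = has_derivative_mult_left[OF has_derivative_power[OF snd_der, where n=3], of "s^2"]
  note dH = has_derivative_add[OF dA dB]
  note all = has_derivative_add[OF dF has_derivative_mult[OF dP dH]]
  show ?thesis
    unfolding e
    apply (rule has_derivative_eq_rhs[OF all]; (assumption)?)
    apply (rule ext)
    using s apply (simp add: AS_def BS_def Xd_def field_simps power2_eq_square power3_eq_cube)
    done
qed



lemma est:
  fixes F P Q t s E L Mf \<delta> :: real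
  assumes t: "0 \<le> t" "t \<le> \<delta>" and s: "0 \<le> s" "s \<le> 1" and E: "0 \<le> E"
    and F: "\<bar>F\<bar> \<le> Mf * (t * s)^2 * E" and P: "\<bar>P\<bar> \<le> L * E" and Q: "\<bar>Q\<bar> \<le> L * E"
  shows "\<bar>F / (2 * s) + t^3 * s^2 * (P + Q * t * s)\<bar> \<le> (Mf / 2 + \<delta> * L * (1 + \<delta>)) * t^2 * E * s"
proof (cases "s = 0")
  case True then show ?thesis by simp
next
  case False
  with s have sp: "s > 0" by simp
  have LE: "0 \<le> L * E" using P by linarith
  have 1: "\<bar>F / (2 * s)\<bar> \<le> Mf / 2 * t^2 * E * s"
  proof -
    have "\<bar>F / (2 * s)\<bar> = \<bar>F\<bar> / (2 * s)" using sp by simp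
    also have "\<dots> \<le> Mf * (t * s)^2 * E / (2 * s)" using F sp by (simp add: divide_right_mono)
    also have "\<dots> = Mf / 2 * t^2 * E * s" using sp by (simp add: field_simps power2_eq_square)
    finally show ?thesis .
  qed
  have ts: "t * s \<le> \<delta>" "0 \<le> t * s"
    using mult_right_le_one_le[of t s] t s by auto
  have 2: "\<bar>P + Q * t * s\<bar> \<le> L * E * (1 + \<delta>)"
  proof -
    have "\<bar>Q * t * s\<bar> = \<bar>Q\<bar> * (t * s)" using t s by (simp add: abs_mult)
    also have "\<dots> \<le> L * E * \<delta>" using Q ts by (intro mult_mono) auto
    finally have "\<bar>Q * t * s\<bar> \<le> L * E * \<delta>" .
    then show ?thesis using P abs_triangle_ineq[of P "Q * t * s"] by (simp add: algebra_simps)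
  qed
  have 3: "t^3 * s^2 \<le> \<delta> * (t^2 * s)"
  proof -
    have "t^3 * s^2 = (t * s) * (t^2 * s)" by (simp add: power2_eq_square power3_eq_cube)
    also have "\<dots> \<le> \<delta> * (t^2 * s)" using ts t s by (intro mult_right_mono) auto
    finally show ?thesis .
  qed
  have 4: "\<bar>t^3 * s^2 * (P + Q * t * s)\<bar> \<le> \<delta> * (t^2 * s) * (L * E * (1 + \<delta>))"
  proof -
    have "\<bar>t^3 * s^2 * (P + Q * t * s)\<bar> = t^3 * s^2 * \<bar>P + Q * t * s\<bar>" using t s by (simp add: abs_mult)
    also have "\<dots> \<le> \<delta> * (t^2 * s) * (L * E * (1 + \<delta>))" 
      by (rule mult_mono[OF 3 2 _ abs_ge_zero]) (use t s in auto)
    finally show ?thesis .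
  qed
  have "\<bar>F / (2 * s) + t^3 * s^2 * (P + Q * t * s)\<bar> \<le> Mf / 2 * t^2 * E * s + \<delta> * (t^2 * s) * (L * E * (1 + \<delta>))"
    using 1 4 abs_triangle_ineq[of "F / (2 * s)" "t^3 * s^2 * (P + Q * t * s)"] by linarith
  also have "\<dots> = (Mf / 2 + \<delta> * L * (1 + \<delta>)) * t^2 * E * s" by (simp add: algebra_simps)
  finally show ?thesis .
qed

lemma compX:
  assumes "continuous_on {x1..x2} g" and "\<And>q s. q \<in> D \<Longrightarrow> s \<in> {0..1} \<Longrightarrow> Xs \<sigma> (fst q) (snd q) s \<in> {x1..x2}"
  shows "continuous_on (D \<times> {0..1}) (\<lambda>x. g (Xs \<sigma> (fst (fst x)) (snd (fst x)) (snd x)))"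
proof -
  have c: "continuous_on (D \<times> {0..1}) (\<lambda>x. Xs \<sigma> (fst (fst x)) (snd (fst x)) (snd x))"
    unfolding Xs_def by (intro continuous_intros)
  show ?thesis
    by (rule continuous_on_compose2[OF assms(1) c]) (use assms(2) in auto)
qed

lemma compD:
  assumes "continuous_on D g" and "\<And>q s. q \<in> D \<Longrightarrow> s \<in> {0..1} \<Longrightarrow> (Xs \<sigma> (fst q) (snd q) s, snd q * s) \<in> D"
  shows "continuous_on (D \<times> {0..1}) (\<lambda>x. g (Xs \<sigma> (fst (fst x)) (snd (fst x)) (snd x), snd (fst x) * snd x))"
proof -
  have c: "continuous_on (D \<times> {0..1}) (\<lambda>x. (Xs \<sigma> (fst (fst x)) (snd (fst x)) (snd x), snd (fst x) * snd x))"
    unfolding Xs_def by (intro continuous_intros)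
  show ?thesis
    by (rule continuous_on_compose2[OF assms(1) c]) (use assms(2) in auto)
qed

lemma sing_inS1:
  fixes f :: "real \<Rightarrow> real \<Rightarrow> real" and a a' b b' :: "real \<Rightarrow> real" and \<sigma> x1 x2 \<delta> Mf L M :: real
  assumes \<sigma>: "\<sigma> = 1 \<or> \<sigma> = -1"
    and fS: "inS1 x1 x2 \<delta> Mf f"
    and ader: "\<And>x. x \<in> {x1..x2} \<Longrightarrow> (a has_real_derivative a' x) (at x within {x1..x2})"
    and bder: "\<And>x. x \<in> {x1..x2} \<Longrightarrow> (b has_real_derivative b' x) (at x within {x1..x2})"
    and ca': "continuous_on {x1..x2} a'" and cb': "continuous_on {x1..x2} b'"
    and bnd: "\<And>x. x \<in> {x1..x2} \<Longrightarrow> \<bar>a x\<bar> \<le> L \<and> \<bar>a' x\<bar> \<le> L \<and> \<bar>b x\<bar> \<le> L \<and> \<bar>b' x\<bar> \<le> L"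
    and lip: "\<And>x y. x \<in> {x1..x2} \<Longrightarrow> y \<in> {x1..x2} \<Longrightarrow>
        \<bar>a' x - a' y\<bar> \<le> L * \<bar>x - y\<bar> \<and> \<bar>b' x - b' y\<bar> \<le> L * \<bar>x - y\<bar>"
    and CM: "Mf / 2 + \<delta> * L * (1 + \<delta>) \<le> 2 * M"
  shows "inS1 x1 x2 \<delta> M (\<lambda>\<eta> \<xi>. integral {0..1} (PhiS f a b \<sigma> (\<eta>, \<xi>))) \<and>
    continuous_on (Dom x1 x2 \<delta> \<times> {0..1}) (\<lambda>(q, s). PhiS f a b \<sigma> q s)"
proof -
  let ?D = "Dom x1 x2 \<delta>"
  from fS obtain fx ft where cfx: "continuous_on ?D fx" and cft: "continuous_on ?D ft"
    and fder: "\<forall>p\<in>?D. ((\<lambda>q. f (fst q) (snd q)) has_derivative (\<lambda>h. fx p * fst h + ft p * snd h)) (at p within ?D)"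
    and f0: "\<forall>x. (x, 0) \<in> ?D \<longrightarrow> f x 0 = 0 \<and> ft (x, 0) = 0"
    and fb: "\<forall>(x, t)\<in>?D. \<bar>f x t\<bar> \<le> Mf * t^2"
    and fxb: "\<forall>(x, t)\<in>?D. \<bar>fx (x, t)\<bar> \<le> Mf * t^2"
    and flip: "\<forall>x y t. (x, t) \<in> ?D \<longrightarrow> (y, t) \<in> ?D \<longrightarrow> \<bar>fx (x, t) - fx (y, t)\<bar> \<le> Mf * t^2 * \<bar>x - y\<bar>"
    unfolding inS1_def by blast
  have mem: "(Xs \<sigma> (fst q) (snd q) s, snd q * s) \<in> ?D" if "q \<in> ?D" "s \<in> {0..1}" for q s
    using Xs_in[OF \<sigma>, of "fst q" "snd q"] that by simp
  have memx: "Xs \<sigma> (fst q) (snd q) s \<in> {x1..x2}" if "q \<in> ?D" "s \<in> {0..1}" for q s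
    using Dom_x[OF mem[OF that]] .
  have cf: "continuous_on ?D (\<lambda>p. f (fst p) (snd p))"
    using fder by (intro has_derivative_continuous_on) auto
  have ca: "continuous_on {x1..x2} a" using ader by (rule DERIV_continuous_on)
  have cb: "continuous_on {x1..x2} b" using bder by (rule DERIV_continuous_on)
  have sq: "\<bar>Mf * (snd q * s)^2\<bar> \<le> \<bar>Mf\<bar> * \<delta>^2 * s^2" if "q \<in> ?D" "s \<in> {0..1}" for q s
  proof -
    have "0 \<le> snd q" "snd q \<le> \<delta>" using that(1) by (auto simp: Dom_def)
    then have "(snd q)^2 \<le> \<delta>^2" by (intro power_mono) auto
    then have "\<bar>Mf\<bar> * ((snd q)^2 * s^2) \<le> \<bar>Mf\<bar> * (\<delta>^2 * s^2)" by (intro mult_left_mono mult_right_mono) auto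
    then show ?thesis by (simp add: abs_mult power_mult_distrib mult.assoc)
  qed
  have fbq: "\<bar>f (Xs \<sigma> (fst q) (snd q) s) (snd q * s)\<bar> \<le> Mf * (snd q * s)^2" if "q \<in> ?D" "s \<in> {0..1}" for q s
    using fb mem[OF that] by auto
  have fxbq: "\<bar>fx (Xs \<sigma> (fst q) (snd q) s, snd q * s)\<bar> \<le> Mf * (snd q * s)^2" if "q \<in> ?D" "s \<in> {0..1}" for q s
    using fxb mem[OF that] by auto
  have der: "((\<lambda>q. PhiS f a b \<sigma> q s) has_derivative
      (\<lambda>h. AS fx a' b' \<sigma> q s * fst h + BS fx ft a b a' b' \<sigma> q s * snd h)) (at q within ?D)"
    if q: "q \<in> ?D" and s: "s \<in> {0..1}" for q s
  proof (cases "s = 0")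
    case False
    with s have sp: "s > 0" by auto
    show ?thesis
      by (rule PhiS_der[OF _ _ _ ader bder q sp]) (use fder mem memx s in auto)
  next
    case True
    have e: "(\<lambda>q. PhiS f a b \<sigma> q s) = (\<lambda>q. 0)" by (simp add: True PhiS_def fun_eq_iff)
    have "AS fx a' b' \<sigma> q s = 0" by (simp add: True AS_def)
    moreover have "ft (Xs \<sigma> (fst q) (snd q) s, snd q * s) = 0"
      using mem[OF q s] f0 True by auto
    ultimately have "BS fx ft a b a' b' \<sigma> q s = 0" by (simp add: True BS_def)
    with \<open>AS fx a' b' \<sigma> q s = 0\<close> show ?thesis unfolding e by simp
  qed
  have memx': "\<And>q s. q \<in> ?D \<Longrightarrow> s \<in> {0..1} \<Longrightarrow> Xs \<sigma> (fst q) (snd q) s \<in> {x1..x2}" using memx by blast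
  have mem': "\<And>q s. q \<in> ?D \<Longrightarrow> s \<in> {0..1} \<Longrightarrow> (Xs \<sigma> (fst q) (snd q) s, snd q * s) \<in> ?D" using mem by blast
  note cXa = compX[OF ca memx'] and cXb = compX[OF cb memx'] and cXa' = compX[OF ca' memx'] and cXb' = compX[OF cb' memx']
  have cXf: "continuous_on (?D \<times> {0..1}) (\<lambda>x. f (Xs \<sigma> (fst (fst x)) (snd (fst x)) (snd x)) (snd (fst x) * snd x))"
    using compD[OF cf mem'] by simp
  note cXfx = compD[OF cfx mem'] and cXft = compD[OF cft mem']
  have k1: "continuous_on (?D \<times> {0..1}) (\<lambda>(q, s). f (Xs \<sigma> (fst q) (snd q) s) (snd q * s) / 2 / s)"
  proof (rule cont_div_s[where c = "\<bar>Mf\<bar> / 2 * \<delta>^2"])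
    show "continuous_on (?D \<times> {0..1}) (\<lambda>(q, s). f (Xs \<sigma> (fst q) (snd q) s) (snd q * s) / 2)"
      unfolding split_beta using cXf by (intro continuous_intros) auto
    show "\<bar>f (Xs \<sigma> (fst q) (snd q) s) (snd q * s) / 2\<bar> \<le> \<bar>Mf\<bar> / 2 * \<delta>^2 * s^2" if "q \<in> ?D" "s \<in> {0..1}" for q s
      using fbq[OF that] sq[OF that] by simp
  qed
  have k2: "continuous_on (?D \<times> {0..1}) (\<lambda>(q, s). fx (Xs \<sigma> (fst q) (snd q) s, snd q * s) / 2 / s)"
  proof (rule cont_div_s[where c = "\<bar>Mf\<bar> / 2 * \<delta>^2"])
    show "continuous_on (?D \<times> {0..1}) (\<lambda>(q, s). fx (Xs \<sigma> (fst q) (snd q) s, snd q * s) / 2)"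
      unfolding split_beta using cXfx by (intro continuous_intros) auto
    show "\<bar>fx (Xs \<sigma> (fst q) (snd q) s, snd q * s) / 2\<bar> \<le> \<bar>Mf\<bar> / 2 * \<delta>^2 * s^2" if "q \<in> ?D" "s \<in> {0..1}" for q s
      using fxbq[OF that] sq[OF that] by simp
  qed
  have cP: "continuous_on (?D \<times> {0..1}) (\<lambda>(q, s). PhiS f a b \<sigma> q s)"
  proof -
    have "continuous_on (?D \<times> {0..1}) (\<lambda>x. (\<lambda>(q, s). f (Xs \<sigma> (fst q) (snd q) s) (snd q * s) / 2 / s) x
       + (snd (fst x))^3 * (snd x)^2 * (a (Xs \<sigma> (fst (fst x)) (snd (fst x)) (snd x))
          + b (Xs \<sigma> (fst (fst x)) (snd (fst x)) (snd x)) * snd (fst x) * snd x))"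
      using k1 cXa cXb by (intro continuous_intros)
    then show ?thesis by (simp add: PhiS_def split_beta)
  qed
  have cA: "continuous_on (?D \<times> {0..1}) (\<lambda>(q, s). AS fx a' b' \<sigma> q s)"
  proof -
    have "continuous_on (?D \<times> {0..1}) (\<lambda>x. (\<lambda>(q, s). fx (Xs \<sigma> (fst q) (snd q) s, snd q * s) / 2 / s) x
       + (snd (fst x))^3 * (snd x)^2 * (a' (Xs \<sigma> (fst (fst x)) (snd (fst x)) (snd x))
          + b' (Xs \<sigma> (fst (fst x)) (snd (fst x)) (snd x)) * snd (fst x) * snd x))"
      using k2 cXa' cXb' by (intro continuous_intros)
    then show ?thesis by (simp add: AS_def split_beta)
  qed
  have cB: "continuous_on (?D \<times> {0..1}) (\<lambda>(q, s). BS fx ft a b a' b' \<sigma> q s)"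
  proof -
    have "continuous_on (?D \<times> {0..1}) (\<lambda>x. Xd \<sigma> (snd (fst x)) (snd x) * (\<lambda>(q, s). AS fx a' b' \<sigma> q s) x
       + ft (Xs \<sigma> (fst (fst x)) (snd (fst x)) (snd x), snd (fst x) * snd x) / 2
       + 3 * (snd (fst x))^2 * (snd x)^2 * (a (Xs \<sigma> (fst (fst x)) (snd (fst x)) (snd x))
          + b (Xs \<sigma> (fst (fst x)) (snd (fst x)) (snd x)) * snd (fst x) * snd x)
       + (snd (fst x))^3 * (snd x)^3 * b (Xs \<sigma> (fst (fst x)) (snd (fst x)) (snd x)))"
      using cA cXft cXa cXb unfolding Xd_def by (intro continuous_intros) auto
    then show ?thesis by (simp add: BS_def split_beta)
  qed
  have tD: "0 \<le> t" "t \<le> \<delta>" if "(x, t) \<in> ?D" for x t using that by (auto simp: Dom_def)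
  have main: "inS1 x1 x2 \<delta> M (\<lambda>\<eta> \<xi>. integral {0..1} (PhiS f a b \<sigma> (\<eta>, \<xi>)))"
  proof (rule gen_inS1[OF Dom_convex der cP cA cB, where C = "Mf / 2 + \<delta> * L * (1 + \<delta>)"])
    fix x s assume x0: "(x, 0) \<in> ?D" and s: "s \<in> {0..(1::real)}"
    have "f x 0 = 0" "ft (x, 0) = 0" using f0 x0 by auto
    then show "PhiS f a b \<sigma> (x, 0) s = 0 \<and> BS fx ft a b a' b' \<sigma> (x, 0) s = 0"
      by (simp add: PhiS_def BS_def Xd_def Xs_0)
  next
    fix x t s assume xt: "(x, t) \<in> ?D" and s: "s \<in> {0..(1::real)}"
    have "\<bar>PhiS f a b \<sigma> (x, t) s\<bar> \<le> (Mf / 2 + \<delta> * L * (1 + \<delta>)) * t^2 * 1 * s"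
      unfolding PhiS_def fst_conv snd_conv
      by (rule est) (use tD[OF xt] s fbq[OF xt s] bnd memx[OF xt s] in auto)
    then show "\<bar>PhiS f a b \<sigma> (x, t) s\<bar> \<le> (Mf / 2 + \<delta> * L * (1 + \<delta>)) * t^2 * s" by simp
  next
    fix x t s assume xt: "(x, t) \<in> ?D" and s: "s \<in> {0..(1::real)}"
    have "\<bar>AS fx a' b' \<sigma> (x, t) s\<bar> \<le> (Mf / 2 + \<delta> * L * (1 + \<delta>)) * t^2 * 1 * s"
      unfolding AS_def fst_conv snd_conv
      by (rule est) (use tD[OF xt] s fxbq[OF xt s] bnd memx[OF xt s] in auto)
    then show "\<bar>AS fx a' b' \<sigma> (x, t) s\<bar> \<le> (Mf / 2 + \<delta> * L * (1 + \<delta>)) * t^2 * s" by simp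
  next
    fix x y t s assume xt: "(x, t) \<in> ?D" and yt: "(y, t) \<in> ?D" and s: "s \<in> {0..(1::real)}"
    let ?X = "Xs \<sigma> x t s" and ?Y = "Xs \<sigma> y t s"
    have XY: "?X - ?Y = x - y" by (rule Xs_lip)
    have mX: "(?X, t * s) \<in> ?D" "(?Y, t * s) \<in> ?D" using mem[OF xt s] mem[OF yt s] by auto
    have xX: "?X \<in> {x1..x2}" "?Y \<in> {x1..x2}" using memx[OF xt s] memx[OF yt s] by auto
    have e: "AS fx a' b' \<sigma> (x, t) s - AS fx a' b' \<sigma> (y, t) s =
      (fx (?X, t * s) - fx (?Y, t * s)) / (2 * s) + t^3 * s^2 * ((a' ?X - a' ?Y) + (b' ?X - b' ?Y) * t * s)"
      by (simp add: AS_def diff_divide_distrib algebra_simps)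
    have "\<bar>AS fx a' b' \<sigma> (x, t) s - AS fx a' b' \<sigma> (y, t) s\<bar> \<le> (Mf / 2 + \<delta> * L * (1 + \<delta>)) * t^2 * \<bar>x - y\<bar> * s"
      unfolding e
    proof (rule est)
      show "\<bar>fx (?X, t * s) - fx (?Y, t * s)\<bar> \<le> Mf * (t * s)^2 * \<bar>x - y\<bar>"
        using flip[rule_format, OF mX] XY by simp
      show "\<bar>a' ?X - a' ?Y\<bar> \<le> L * \<bar>x - y\<bar>" "\<bar>b' ?X - b' ?Y\<bar> \<le> L * \<bar>x - y\<bar>"
        using lip[OF xX] XY by auto
    qed (use tD[OF xt] s in auto)
    then show "\<bar>AS fx a' b' \<sigma> (x, t) s - AS fx a' b' \<sigma> (y, t) s\<bar> \<le> (Mf / 2 + \<delta> * L * (1 + \<delta>)) * t^2 * \<bar>x - y\<bar> * s" .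
  qed (use CM in auto)
  show ?thesis using main cP by simp
qed



definition PhiW where
  "PhiW f g \<sigma> q s = -2 * (snd q)^2 * s * (f (Xs \<sigma> (fst q) (snd q) s) (snd q * s) + g (Xs \<sigma> (fst q) (snd q) s))"

definition AW where
  "AW fx g' \<sigma> q s = -2 * (snd q)^2 * s * (fx (Xs \<sigma> (fst q) (snd q) s, snd q * s) + g' (Xs \<sigma> (fst q) (snd q) s))"

definition BW where
  "BW f fx ft g g' \<sigma> q s = Xd \<sigma> (snd q) s * AW fx g' \<sigma> q s
     - 4 * snd q * s * (f (Xs \<sigma> (fst q) (snd q) s) (snd q * s) + g (Xs \<sigma> (fst q) (snd q) s))
     - 2 * (snd q)^2 * s^2 * ft (Xs \<sigma> (fst q) (snd q) s, snd q * s)"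

lemma PhiW_der:
  assumes fder: "\<And>p. p \<in> D \<Longrightarrow> ((\<lambda>q. f (fst q) (snd q)) has_derivative (\<lambda>h. fx p * fst h + ft p * snd h)) (at p within D)"
    and mem: "\<And>q. q \<in> D \<Longrightarrow> (Xs \<sigma> (fst q) (snd q) s, snd q * s) \<in> D"
    and memx: "\<And>q. q \<in> D \<Longrightarrow> Xs \<sigma> (fst q) (snd q) s \<in> {x1..x2}"
    and gder: "\<And>x. x \<in> {x1..x2} \<Longrightarrow> (g has_real_derivative g' x) (at x within {x1..x2})"
    and q: "q \<in> D"
  shows "((\<lambda>q. PhiW f g \<sigma> q s) has_derivative
     (\<lambda>h. AW fx g' \<sigma> q s * fst h + BW f fx ft g g' \<sigma> q s * snd h)) (at q within D)"
proof -
  have e: "(\<lambda>q. PhiW f g \<sigma> q s) = (\<lambda>q. (-2 * (snd q)^2) * s * (f (Xs \<sigma> (fst q) (snd q) s) (snd q * s) + g (Xs \<sigma> (fst q) (snd q) s)))"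
    by (simp add: PhiW_def fun_eq_iff)
  note dF = comp_f[OF fder mem q]
  note dG = comp_a[OF gder memx q]
  note dP = has_derivative_mult_left[OF has_derivative_mult_right[OF has_derivative_power[OF snd_der, where n=2], of "-2"], of s]
  note all = has_derivative_mult[OF dP has_derivative_add[OF dF dG]]
  show ?thesis
    unfolding e
    apply (rule has_derivative_eq_rhs[OF all]; (assumption)?)
    apply (rule ext)
    apply (simp add: AW_def BW_def Xd_def algebra_simps power2_eq_square power3_eq_cube)
    done
qed

lemma estW:
  fixes F G t s E L Mf \<delta> :: real
  assumes t: "0 \<le> t" "t \<le> \<delta>" and s: "0 \<le> s" "s \<le> 1" and Mf: "0 \<le> Mf" and E: "0 \<le> E"
    and F: "\<bar>F\<bar> \<le> Mf * (t * s)^2 * E" and G: "\<bar>G\<bar> \<le> L * E"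
  shows "\<bar>-2 * t^2 * s * (F + G)\<bar> \<le> 2 * (Mf * \<delta>^2 + L) * t^2 * E * s"
proof -
  have ts: "t * s \<le> \<delta>" "0 \<le> t * s"
    using mult_right_le_one_le[of t s] t s by auto
  have "(t * s)^2 \<le> \<delta>^2" using ts by (intro power_mono) auto
  then have "Mf * (t * s)^2 * E \<le> Mf * \<delta>^2 * E" using Mf E by (intro mult_right_mono mult_left_mono) auto
  then have "\<bar>F + G\<bar> \<le> (Mf * \<delta>^2 + L) * E" using F G abs_triangle_ineq[of F G] by (simp add: algebra_simps)
  then have "2 * t^2 * s * \<bar>F + G\<bar> \<le> 2 * t^2 * s * ((Mf * \<delta>^2 + L) * E)"
    using t s by (intro mult_left_mono) auto
  moreover have "\<bar>-2 * t^2 * s * (F + G)\<bar> = 2 * t^2 * s * \<bar>F + G\<bar>" using t s by (simp add: abs_mult)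
  moreover have "2 * t^2 * s * ((Mf * \<delta>^2 + L) * E) = 2 * (Mf * \<delta>^2 + L) * t^2 * E * s" by (simp add: mult_ac)
  ultimately show ?thesis by simp
qed

lemma W_inS1:
  fixes f :: "real \<Rightarrow> real \<Rightarrow> real" and g g' :: "real \<Rightarrow> real" and \<sigma> x1 x2 \<delta> Mf L M :: real
  assumes \<sigma>: "\<sigma> = 1 \<or> \<sigma> = -1"
    and fS: "inS1 x1 x2 \<delta> Mf f" and Mf: "0 \<le> Mf"
    and gder: "\<And>x. x \<in> {x1..x2} \<Longrightarrow> (g has_real_derivative g' x) (at x within {x1..x2})"
    and cg': "continuous_on {x1..x2} g'"
    and bnd: "\<And>x. x \<in> {x1..x2} \<Longrightarrow> \<bar>g x\<bar> \<le> L \<and> \<bar>g' x\<bar> \<le> L"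
    and lip: "\<And>x y. x \<in> {x1..x2} \<Longrightarrow> y \<in> {x1..x2} \<Longrightarrow> \<bar>g' x - g' y\<bar> \<le> L * \<bar>x - y\<bar>"
    and CM: "Mf * \<delta>^2 + L \<le> M"
  shows "inS1 x1 x2 \<delta> M (\<lambda>\<eta> \<xi>. integral {0..1} (PhiW f g \<sigma> (\<eta>, \<xi>))) \<and>
    continuous_on (Dom x1 x2 \<delta> \<times> {0..1}) (\<lambda>(q, s). PhiW f g \<sigma> q s)"
proof -
  let ?D = "Dom x1 x2 \<delta>"
  from fS obtain fx ft where cfx: "continuous_on ?D fx" and cft: "continuous_on ?D ft"
    and fder: "\<forall>p\<in>?D. ((\<lambda>q. f (fst q) (snd q)) has_derivative (\<lambda>h. fx p * fst h + ft p * snd h)) (at p within ?D)"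
    and f0: "\<forall>x. (x, 0) \<in> ?D \<longrightarrow> f x 0 = 0 \<and> ft (x, 0) = 0"
    and fb: "\<forall>(x, t)\<in>?D. \<bar>f x t\<bar> \<le> Mf * t^2"
    and fxb: "\<forall>(x, t)\<in>?D. \<bar>fx (x, t)\<bar> \<le> Mf * t^2"
    and flip: "\<forall>x y t. (x, t) \<in> ?D \<longrightarrow> (y, t) \<in> ?D \<longrightarrow> \<bar>fx (x, t) - fx (y, t)\<bar> \<le> Mf * t^2 * \<bar>x - y\<bar>"
    unfolding inS1_def by blast
  have mem: "(Xs \<sigma> (fst q) (snd q) s, snd q * s) \<in> ?D" if "q \<in> ?D" "s \<in> {0..1}" for q s
    using Xs_in[OF \<sigma>, of "fst q" "snd q"] that by simp
  have memx: "Xs \<sigma> (fst q) (snd q) s \<in> {x1..x2}" if "q \<in> ?D" "s \<in> {0..1}" for q s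
    using Dom_x[OF mem[OF that]] .
  have cf: "continuous_on ?D (\<lambda>p. f (fst p) (snd p))"
    using fder by (intro has_derivative_continuous_on) auto
  have cg: "continuous_on {x1..x2} g" using gder by (rule DERIV_continuous_on)
  have fbq: "\<bar>f (Xs \<sigma> (fst q) (snd q) s) (snd q * s)\<bar> \<le> Mf * (snd q * s)^2" if "q \<in> ?D" "s \<in> {0..1}" for q s
    using fb mem[OF that] by auto
  have fxbq: "\<bar>fx (Xs \<sigma> (fst q) (snd q) s, snd q * s)\<bar> \<le> Mf * (snd q * s)^2" if "q \<in> ?D" "s \<in> {0..1}" for q s
    using fxb mem[OF that] by auto
  have der: "((\<lambda>q. PhiW f g \<sigma> q s) has_derivative
      (\<lambda>h. AW fx g' \<sigma> q s * fst h + BW f fx ft g g' \<sigma> q s * snd h)) (at q within ?D)"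
    if q: "q \<in> ?D" and s: "s \<in> {0..1}" for q s
    by (rule PhiW_der[OF _ _ _ gder q]) (use fder mem memx s in auto)
  have memx': "\<And>q s. q \<in> ?D \<Longrightarrow> s \<in> {0..1} \<Longrightarrow> Xs \<sigma> (fst q) (snd q) s \<in> {x1..x2}" using memx by blast
  have mem': "\<And>q s. q \<in> ?D \<Longrightarrow> s \<in> {0..1} \<Longrightarrow> (Xs \<sigma> (fst q) (snd q) s, snd q * s) \<in> ?D" using mem by blast
  note cXg = compX[OF cg memx'] and cXg' = compX[OF cg' memx']
  have cXf: "continuous_on (?D \<times> {0..1}) (\<lambda>x. f (Xs \<sigma> (fst (fst x)) (snd (fst x)) (snd x)) (snd (fst x) * snd x))"
    using compD[OF cf mem'] by simp
  note cXfx = compD[OF cfx mem'] and cXft = compD[OF cft mem']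
  have cP: "continuous_on (?D \<times> {0..1}) (\<lambda>(q, s). PhiW f g \<sigma> q s)"
    unfolding PhiW_def split_beta using cXf cXg by (intro continuous_intros) auto
  have cA: "continuous_on (?D \<times> {0..1}) (\<lambda>(q, s). AW fx g' \<sigma> q s)"
    unfolding AW_def split_beta using cXfx cXg' by (intro continuous_intros) auto
  have cB: "continuous_on (?D \<times> {0..1}) (\<lambda>(q, s). BW f fx ft g g' \<sigma> q s)"
    unfolding BW_def AW_def Xd_def split_beta using cXfx cXg' cXf cXg cXft by (intro continuous_intros) auto
  have tD: "0 \<le> t" "t \<le> \<delta>" if "(x, t) \<in> ?D" for x t using that by (auto simp: Dom_def)
  have main: "inS1 x1 x2 \<delta> M (\<lambda>\<eta> \<xi>. integral {0..1} (PhiW f g \<sigma> (\<eta>, \<xi>)))"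
  proof (rule gen_inS1[OF Dom_convex der cP cA cB, where C = "2 * (Mf * \<delta>^2 + L)"])
    fix x s assume x0: "(x, 0) \<in> ?D" and s: "s \<in> {0..(1::real)}"
    show "PhiW f g \<sigma> (x, 0) s = 0 \<and> BW f fx ft g g' \<sigma> (x, 0) s = 0"
      by (simp add: PhiW_def BW_def Xd_def)
  next
    fix x t s assume xt: "(x, t) \<in> ?D" and s: "s \<in> {0..(1::real)}"
    have "\<bar>PhiW f g \<sigma> (x, t) s\<bar> \<le> 2 * (Mf * \<delta>^2 + L) * t^2 * 1 * s"
      unfolding PhiW_def fst_conv snd_conv
      by (rule estW) (use tD[OF xt] s fbq[OF xt s] bnd memx[OF xt s] Mf in auto)
    then show "\<bar>PhiW f g \<sigma> (x, t) s\<bar> \<le> 2 * (Mf * \<delta>^2 + L) * t^2 * s" by simp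
  next
    fix x t s assume xt: "(x, t) \<in> ?D" and s: "s \<in> {0..(1::real)}"
    have "\<bar>AW fx g' \<sigma> (x, t) s\<bar> \<le> 2 * (Mf * \<delta>^2 + L) * t^2 * 1 * s"
      unfolding AW_def fst_conv snd_conv
      by (rule estW) (use tD[OF xt] s fxbq[OF xt s] bnd memx[OF xt s] Mf in auto)
    then show "\<bar>AW fx g' \<sigma> (x, t) s\<bar> \<le> 2 * (Mf * \<delta>^2 + L) * t^2 * s" by simp
  next
    fix x y t s assume xt: "(x, t) \<in> ?D" and yt: "(y, t) \<in> ?D" and s: "s \<in> {0..(1::real)}"
    let ?X = "Xs \<sigma> x t s" and ?Y = "Xs \<sigma> y t s"
    have XY: "?X - ?Y = x - y" by (rule Xs_lip)
    have mX: "(?X, t * s) \<in> ?D" "(?Y, t * s) \<in> ?D" using mem[OF xt s] mem[OF yt s] by auto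
    have xX: "?X \<in> {x1..x2}" "?Y \<in> {x1..x2}" using memx[OF xt s] memx[OF yt s] by auto
    have e: "AW fx g' \<sigma> (x, t) s - AW fx g' \<sigma> (y, t) s =
      -2 * t^2 * s * ((fx (?X, t * s) - fx (?Y, t * s)) + (g' ?X - g' ?Y))"
      by (simp add: AW_def algebra_simps)
    have "\<bar>AW fx g' \<sigma> (x, t) s - AW fx g' \<sigma> (y, t) s\<bar> \<le> 2 * (Mf * \<delta>^2 + L) * t^2 * \<bar>x - y\<bar> * s"
      unfolding e
    proof (rule estW)
      show "\<bar>fx (?X, t * s) - fx (?Y, t * s)\<bar> \<le> Mf * (t * s)^2 * \<bar>x - y\<bar>"
        using flip[rule_format, OF mX] XY by simp
      show "\<bar>g' ?X - g' ?Y\<bar> \<le> L * \<bar>x - y\<bar>"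
        using lip[OF xX] XY by auto
    qed (use tD[OF xt] s Mf in auto)
    then show "\<bar>AW fx g' \<sigma> (x, t) s - AW fx g' \<sigma> (y, t) s\<bar> \<le> 2 * (Mf * \<delta>^2 + L) * t^2 * \<bar>x - y\<bar> * s" .
  qed (use CM in auto)
  show ?thesis using main cP by simp
qed



lemma inS1_cong:
  assumes "\<And>x t. (x, t) \<in> Dom x1 x2 \<delta> \<Longrightarrow> f x t = g x t" and "inS1 x1 x2 \<delta> M f"
  shows "inS1 x1 x2 \<delta> M g"
proof -
  let ?D = "Dom x1 x2 \<delta>"
  from assms(2) obtain fx ft where cfx: "continuous_on ?D fx" and cft: "continuous_on ?D ft"
    and fder: "\<forall>p\<in>?D. ((\<lambda>q. f (fst q) (snd q)) has_derivative (\<lambda>h. fx p * fst h + ft p * snd h)) (at p within ?D)"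
    and f0: "\<forall>x. (x, 0) \<in> ?D \<longrightarrow> f x 0 = 0 \<and> ft (x, 0) = 0"
    and fb: "\<forall>(x, t)\<in>?D. \<bar>f x t\<bar> \<le> M * t^2"
    and fxb: "\<forall>(x, t)\<in>?D. \<bar>fx (x, t)\<bar> \<le> M * t^2"
    and flip: "\<forall>x y t. (x, t) \<in> ?D \<longrightarrow> (y, t) \<in> ?D \<longrightarrow> \<bar>fx (x, t) - fx (y, t)\<bar> \<le> M * t^2 * \<bar>x - y\<bar>"
    unfolding inS1_def by blast
  have gder: "\<forall>p\<in>?D. ((\<lambda>q. g (fst q) (snd q)) has_derivative (\<lambda>h. fx p * fst h + ft p * snd h)) (at p within ?D)"
  proof
    fix p assume p: "p \<in> ?D"
    show "((\<lambda>q. g (fst q) (snd q)) has_derivative (\<lambda>h. fx p * fst h + ft p * snd h)) (at p within ?D)"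
      by (rule has_derivative_transform[OF p _ fder[rule_format, OF p]]) (use assms(1) in auto)
  qed
  show ?thesis unfolding inS1_def
    using cfx cft gder f0 fb fxb flip assms(1) by (intro exI[of _ fx] exI[of _ ft]) auto
qed

lemma inS1_diff:
  assumes "inS1 x1 x2 \<delta> M f" "inS1 x1 x2 \<delta> M g"
  shows "inS1 x1 x2 \<delta> (2 * M) (\<lambda>x t. f x t - g x t)"
proof -
  let ?D = "Dom x1 x2 \<delta>"
  from assms(1) obtain fx ft where cfx: "continuous_on ?D fx" and cft: "continuous_on ?D ft"
    and fder: "\<forall>p\<in>?D. ((\<lambda>q. f (fst q) (snd q)) has_derivative (\<lambda>h. fx p * fst h + ft p * snd h)) (at p within ?D)"
    and f0: "\<forall>x. (x, 0) \<in> ?D \<longrightarrow> f x 0 = 0 \<and> ft (x, 0) = 0"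
    and fb: "\<forall>(x, t)\<in>?D. \<bar>f x t\<bar> \<le> M * t^2"
    and fxb: "\<forall>(x, t)\<in>?D. \<bar>fx (x, t)\<bar> \<le> M * t^2"
    and flip: "\<forall>x y t. (x, t) \<in> ?D \<longrightarrow> (y, t) \<in> ?D \<longrightarrow> \<bar>fx (x, t) - fx (y, t)\<bar> \<le> M * t^2 * \<bar>x - y\<bar>"
    unfolding inS1_def by blast
  from assms(2) obtain gx gt where cgx: "continuous_on ?D gx" and cgt: "continuous_on ?D gt"
    and gder: "\<forall>p\<in>?D. ((\<lambda>q. g (fst q) (snd q)) has_derivative (\<lambda>h. gx p * fst h + gt p * snd h)) (at p within ?D)"
    and g0: "\<forall>x. (x, 0) \<in> ?D \<longrightarrow> g x 0 = 0 \<and> gt (x, 0) = 0"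
    and gb: "\<forall>(x, t)\<in>?D. \<bar>g x t\<bar> \<le> M * t^2"
    and gxb: "\<forall>(x, t)\<in>?D. \<bar>gx (x, t)\<bar> \<le> M * t^2"
    and glip: "\<forall>x y t. (x, t) \<in> ?D \<longrightarrow> (y, t) \<in> ?D \<longrightarrow> \<bar>gx (x, t) - gx (y, t)\<bar> \<le> M * t^2 * \<bar>x - y\<bar>"
    unfolding inS1_def by blast
  have der: "\<forall>p\<in>?D. ((\<lambda>q. f (fst q) (snd q) - g (fst q) (snd q)) has_derivative
      (\<lambda>h. (fx p - gx p) * fst h + (ft p - gt p) * snd h)) (at p within ?D)"
  proof
    fix p assume p: "p \<in> ?D"
    show "((\<lambda>q. f (fst q) (snd q) - g (fst q) (snd q)) has_derivative
      (\<lambda>h. (fx p - gx p) * fst h + (ft p - gt p) * snd h)) (at p within ?D)"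
      using has_derivative_diff[OF fder[rule_format, OF p] gder[rule_format, OF p]]
      by (simp add: algebra_simps)
  qed
  have b1: "\<bar>f x t - g x t\<bar> \<le> 2 * M * t^2" if "(x, t) \<in> ?D" for x t
    using fb gb that by fastforce
  have b2: "\<bar>fx (x, t) - gx (x, t)\<bar> \<le> 2 * M * t^2" if "(x, t) \<in> ?D" for x t
    using fxb gxb that by fastforce
  have b3: "\<bar>(fx (x, t) - gx (x, t)) - (fx (y, t) - gx (y, t))\<bar> \<le> 2 * M * t^2 * \<bar>x - y\<bar>"
    if "(x, t) \<in> ?D" "(y, t) \<in> ?D" for x y t
    using flip[rule_format, OF that] glip[rule_format, OF that] by simp
  show ?thesis unfolding inS1_def
    apply (rule exI[of _ "\<lambda>p. fx p - gx p"], rule exI[of _ "\<lambda>p. ft p - gt p"])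
    using cfx cft cgx cgt der f0 g0 b1 b2 b3 by (auto intro!: continuous_intros)
qed

lemma lip_deriv:
  assumes "\<And>x. x \<in> {a..b} \<Longrightarrow> (g has_real_derivative g' x) (at x within {a..b})"
    and "\<And>x. x \<in> {a..b} \<Longrightarrow> \<bar>g' x\<bar> \<le> K" and "x \<in> {a..b}" "y \<in> {a..b}"
  shows "\<bar>g x - g y\<bar> \<le> K * \<bar>x - y\<bar>"
  using field_differentiable_bound[of "{a..b}" g g' K x y] assms by auto

lemma inS1_P12:
  assumes "inS1 x1 x2 \<delta> M f"
  shows "\<And>x. (x, 0) \<in> Dom x1 x2 \<delta> \<Longrightarrow> f x 0 = 0"
    and "\<And>x t. (x, t) \<in> Dom x1 x2 \<delta> \<Longrightarrow> \<bar>f x t\<bar> \<le> M * t^2"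
  using assms unfolding inS1_def by blast+

lemma dist_bdd:
  assumes "inS1 x1 x2 \<delta> M f" "inS1 x1 x2 \<delta> M g" "0 \<le> M"
  shows "bdd_above ((\<lambda>p. \<bar>f (fst p) (snd p) - g (fst p) (snd p)\<bar> / (snd p)^2) ` Dom x1 x2 \<delta>)"
proof (rule bdd_aboveI2)
  fix p assume p: "p \<in> Dom x1 x2 \<delta>"
  obtain x t where pe: "p = (x, t)" by (cases p)
  show "\<bar>f (fst p) (snd p) - g (fst p) (snd p)\<bar> / (snd p)^2 \<le> 2 * M"
  proof (cases "t = 0")
    case True then show ?thesis using assms(3) pe by simp
  next
    case False
    have "\<bar>f x t - g x t\<bar> \<le> 2 * M * t^2"
      using inS1_P12(2)[OF assms(1), of x t] inS1_P12(2)[OF assms(2), of x t] p pe by auto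
    then show ?thesis using False pe by (simp add: divide_le_eq)
  qed
qed

lemma dist_le:
  assumes "inS1 x1 x2 \<delta> M f" "inS1 x1 x2 \<delta> M g" "0 \<le> M" "(x, t) \<in> Dom x1 x2 \<delta>"
  shows "\<bar>f x t - g x t\<bar> \<le> dist1 x1 x2 \<delta> f g * t^2"
proof (cases "t = 0")
  case True
  then show ?thesis using inS1_P12(1)[OF assms(1), of x] inS1_P12(1)[OF assms(2), of x] assms(4) by simp
next
  case False
  have "\<bar>f x t - g x t\<bar> / t^2 \<le> dist1 x1 x2 \<delta> f g"
    unfolding dist1_def using cSUP_upper[OF assms(4) dist_bdd[OF assms(1-3)]] by simp
  then show ?thesis using False by (simp add: divide_le_eq)
qed

lemma dist_nonneg:
  assumes "inS1 x1 x2 \<delta> M f" "inS1 x1 x2 \<delta> M g" "0 \<le> M" "Dom x1 x2 \<delta> \<noteq> {}"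
  shows "0 \<le> dist1 x1 x2 \<delta> f g"
proof -
  obtain p where p: "p \<in> Dom x1 x2 \<delta>" using assms(4) by auto
  have "0 \<le> \<bar>f (fst p) (snd p) - g (fst p) (snd p)\<bar> / (snd p)^2" by simp
  also have "\<dots> \<le> dist1 x1 x2 \<delta> f g"
    unfolding dist1_def by (rule cSUP_upper[OF p dist_bdd[OF assms(1-3)]])
  finally show ?thesis .
qed

lemma dist_least:
  assumes "Dom x1 x2 \<delta> \<noteq> {}" "0 \<le> c" "\<And>x t. (x, t) \<in> Dom x1 x2 \<delta> \<Longrightarrow> \<bar>F x t - G x t\<bar> \<le> c * t^2"
  shows "dist1 x1 x2 \<delta> F G \<le> c"
  unfolding dist1_def
proof (rule cSUP_least[OF assms(1)])
  fix p assume p: "p \<in> Dom x1 x2 \<delta>"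
  obtain x t where pe: "p = (x, t)" by (cases p)
  show "\<bar>F (fst p) (snd p) - G (fst p) (snd p)\<bar> / (snd p)^2 \<le> c"
  proof (cases "t = 0")
    case True then show ?thesis using assms(2) pe by simp
  next
    case False
    then show ?thesis using assms(3)[of x t] p pe by (simp add: divide_le_eq)
  qed
qed

lemma dist_cong:
  assumes "\<And>x t. (x, t) \<in> Dom x1 x2 \<delta> \<Longrightarrow> F x t = F' x t \<and> G x t = G' x t"
  shows "dist1 x1 x2 \<delta> F G = dist1 x1 x2 \<delta> F' G'"
  unfolding dist1_def
  by (rule SUP_cong[OF refl]) (use assms in auto)

lemma subst01':
  fixes h \<Phi> :: "real \<Rightarrow> real"
  assumes "0 \<le> \<xi>" "continuous_on {0..1} \<Phi>" "\<And>u. u \<in> {0..1} \<Longrightarrow> \<xi> * h (\<xi> * u) = \<Phi> u"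
  shows "integral {0..\<xi>} h = integral {0..1} \<Phi>"
proof -
  have c: "continuous_on {0..1} (\<lambda>u. \<xi> * h (\<xi> * u))"
    using assms(2) by (rule continuous_on_eq) (use assms(3) in auto)
  have "integral {0..\<xi>} h = integral {0..1} (\<lambda>u. \<xi> * h (\<xi> * u))" by (rule subst01[OF assms(1) c])
  also have "\<dots> = integral {0..1} \<Phi>" by (rule integral_cong) (use assms(3) in auto)
  finally show ?thesis .
qed

lemma repR:
  assumes D: "(\<eta>, \<xi>) \<in> Dom x1 x2 \<delta>" and r: "inS1 x1 x2 \<delta> M r" and s: "inS1 x1 x2 \<delta> M s"
    and c: "continuous_on (Dom x1 x2 \<delta> \<times> {0..1})
       (\<lambda>(q, u). PhiS (\<lambda>x t. r x t - s x t) (\<lambda>x. -2 * U1 1 x) (\<lambda>x. -2 * U0 2 x) 1 q u)"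
  shows "opR U0 U1 r s \<eta> \<xi> = integral {0..1}
      (PhiS (\<lambda>x t. r x t - s x t) (\<lambda>x. -2 * U1 1 x) (\<lambda>x. -2 * U0 2 x) 1 (\<eta>, \<xi>))"
  unfolding opR_def
proof (rule subst01')
  show "0 \<le> \<xi>" using D by (simp add: Dom_def)
  show "continuous_on {0..1} (PhiS (\<lambda>x t. r x t - s x t) (\<lambda>x. -2 * U1 1 x) (\<lambda>x. -2 * U0 2 x) 1 (\<eta>, \<xi>))"
    using cont01[OF c D] .
  fix u :: real assume u: "u \<in> {0..1}"
  let ?X = "Xs 1 \<eta> \<xi> u"
  let ?F = "r ?X (\<xi> * u) - s ?X (\<xi> * u)"
  have e1: "\<xi> * (?F / (2 * (\<xi> * u))) = ?F / (2 * u)"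
  proof (cases "\<xi> = 0")
    case True
    then have "(\<eta>, 0) \<in> Dom x1 x2 \<delta>" using D by simp
    then have "r \<eta> 0 = 0" "s \<eta> 0 = 0" using inS1_P12(1)[OF r] inS1_P12(1)[OF s] by auto
    then show ?thesis using True by (simp add: Xs_0)
  next
    case False then show ?thesis by (cases "u = 0") (auto simp: field_simps)
  qed
  have e2: "\<xi> * (2 * (\<xi> * u)^2 * (U1 1 ?X + U0 2 ?X * (\<xi> * u))) = \<xi>^3 * u^2 * (2 * U1 1 ?X + 2 * U0 2 ?X * \<xi> * u)"
    by (simp add: algebra_simps power2_eq_square power3_eq_cube)
  show "\<xi> * ((r (x_plus \<eta> \<xi> (\<xi> * u)) (\<xi> * u) - s (x_plus \<eta> \<xi> (\<xi> * u)) (\<xi> * u)) / (2 * (\<xi> * u))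
      - 2 * (\<xi> * u)^2 * (U1 1 (x_plus \<eta> \<xi> (\<xi> * u)) + U0 2 (x_plus \<eta> \<xi> (\<xi> * u)) * (\<xi> * u))) =
    PhiS (\<lambda>x t. r x t - s x t) (\<lambda>x. -2 * U1 1 x) (\<lambda>x. -2 * U0 2 x) 1 (\<eta>, \<xi>) u"
    unfolding Xs_plus PhiS_def fst_conv snd_conv right_diff_distrib e1 e2 by (simp add: algebra_simps)
qed

lemma repS:
  assumes D: "(\<eta>, \<xi>) \<in> Dom x1 x2 \<delta>" and r: "inS1 x1 x2 \<delta> M r" and s: "inS1 x1 x2 \<delta> M s"
    and c: "continuous_on (Dom x1 x2 \<delta> \<times> {0..1})
       (\<lambda>(q, u). PhiS (\<lambda>x t. s x t - r x t) (\<lambda>x. 2 * U1 1 x) (\<lambda>x. -2 * U0 2 x) (-1) q u)"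
  shows "opS U0 U1 r s \<eta> \<xi> = integral {0..1}
      (PhiS (\<lambda>x t. s x t - r x t) (\<lambda>x. 2 * U1 1 x) (\<lambda>x. -2 * U0 2 x) (-1) (\<eta>, \<xi>))"
  unfolding opS_def
proof (rule subst01')
  show "0 \<le> \<xi>" using D by (simp add: Dom_def)
  show "continuous_on {0..1} (PhiS (\<lambda>x t. s x t - r x t) (\<lambda>x. 2 * U1 1 x) (\<lambda>x. -2 * U0 2 x) (-1) (\<eta>, \<xi>))"
    using cont01[OF c D] .
  fix u :: real assume u: "u \<in> {0..1}"
  let ?X = "Xs (-1) \<eta> \<xi> u"
  let ?F = "s ?X (\<xi> * u) - r ?X (\<xi> * u)"
  have e1: "\<xi> * (?F / (2 * (\<xi> * u))) = ?F / (2 * u)"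
  proof (cases "\<xi> = 0")
    case True
    then have "(\<eta>, 0) \<in> Dom x1 x2 \<delta>" using D by simp
    then have "r \<eta> 0 = 0" "s \<eta> 0 = 0" using inS1_P12(1)[OF r] inS1_P12(1)[OF s] by auto
    then show ?thesis using True by (simp add: Xs_0)
  next
    case False then show ?thesis by (cases "u = 0") (auto simp: field_simps)
  qed
  have e2: "\<xi> * (2 * (\<xi> * u)^2 * (U1 1 ?X - U0 2 ?X * (\<xi> * u))) = \<xi>^3 * u^2 * (2 * U1 1 ?X + - 2 * U0 2 ?X * \<xi> * u)"
    by (simp add: algebra_simps power2_eq_square power3_eq_cube)
  show "\<xi> * ((s (x_minus \<eta> \<xi> (\<xi> * u)) (\<xi> * u) - r (x_minus \<eta> \<xi> (\<xi> * u)) (\<xi> * u)) / (2 * (\<xi> * u))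
      + 2 * (\<xi> * u)^2 * (U1 1 (x_minus \<eta> \<xi> (\<xi> * u)) - U0 2 (x_minus \<eta> \<xi> (\<xi> * u)) * (\<xi> * u))) =
    PhiS (\<lambda>x t. s x t - r x t) (\<lambda>x. 2 * U1 1 x) (\<lambda>x. -2 * U0 2 x) (-1) (\<eta>, \<xi>) u"
    unfolding Xs_minus PhiS_def fst_conv snd_conv distrib_left e1 e2 by (simp add: algebra_simps)
qed

lemma repW:
  assumes D: "(\<eta>, \<xi>) \<in> Dom x1 x2 \<delta>"
    and c: "continuous_on (Dom x1 x2 \<delta> \<times> {0..1}) (\<lambda>(q, u). PhiW r (U1 0) (-1) q u)"
  shows "opW U1 r \<eta> \<xi> = integral {0..1} (PhiW r (U1 0) (-1) (\<eta>, \<xi>))"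
proof -
  have "integral {0..\<xi>} (\<lambda>t. t * (r (x_minus \<eta> \<xi> t) t + U1 0 (x_minus \<eta> \<xi> t)))
      = integral {0..1} (\<lambda>u. -(1/2) * PhiW r (U1 0) (-1) (\<eta>, \<xi>) u)"
  proof (rule subst01')
    show "0 \<le> \<xi>" using D by (simp add: Dom_def)
    show "continuous_on {0..1} (\<lambda>u. -(1/2) * PhiW r (U1 0) (-1) (\<eta>, \<xi>) u)"
      using cont01[OF c D] by (intro continuous_intros)
    fix u :: real assume u: "u \<in> {0..1}"
    show "\<xi> * ((\<xi> * u) * (r (x_minus \<eta> \<xi> (\<xi> * u)) (\<xi> * u) + U1 0 (x_minus \<eta> \<xi> (\<xi> * u)))) =
       -(1/2) * PhiW r (U1 0) (-1) (\<eta>, \<xi>) u"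
      unfolding Xs_minus PhiW_def fst_conv snd_conv by (simp add: algebra_simps power2_eq_square)
  qed
  then show ?thesis unfolding opW_def by simp
qed



lemma half_bound:
  fixes F d \<xi> u :: real
  assumes "u \<in> {0..1}" "\<bar>F\<bar> \<le> d * (\<xi> * u)^2"
  shows "\<bar>F / (2 * u)\<bar> \<le> d / 2 * \<xi>^2 * u"
proof (cases "u = 0")
  case True then show ?thesis by simp
next
  case False
  with assms(1) have up: "u > 0" by simp
  have "\<bar>F / (2 * u)\<bar> = \<bar>F\<bar> / (2 * u)" using up by simp
  also have "\<dots> \<le> d * (\<xi> * u)^2 / (2 * u)" using assms(2) up by (simp add: divide_right_mono)
  also have "\<dots> = d / 2 * \<xi>^2 * u" using up by (simp add: field_simps power2_eq_square)
  finally show ?thesis .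
qed

lemma contrPhiS:
  assumes q: "(\<eta>, \<xi>) \<in> Dom x1 x2 \<delta>"
    and c1: "continuous_on (Dom x1 x2 \<delta> \<times> {0..1}) (\<lambda>(q, u). PhiS f a b \<sigma> q u)"
    and c2: "continuous_on (Dom x1 x2 \<delta> \<times> {0..1}) (\<lambda>(q, u). PhiS f' a b \<sigma> q u)"
    and fb: "\<And>u. u \<in> {0..1} \<Longrightarrow> \<bar>f (Xs \<sigma> \<eta> \<xi> u) (\<xi> * u) - f' (Xs \<sigma> \<eta> \<xi> u) (\<xi> * u)\<bar> \<le> d * (\<xi> * u)^2"
  shows "\<bar>integral {0..1} (PhiS f a b \<sigma> (\<eta>, \<xi>)) - integral {0..1} (PhiS f' a b \<sigma> (\<eta>, \<xi>))\<bar> \<le> d / 4 * \<xi>^2"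
proof -
  have i1: "continuous_on {0..1} (PhiS f a b \<sigma> (\<eta>, \<xi>))" using cont01[OF c1 q] .
  have i2: "continuous_on {0..1} (PhiS f' a b \<sigma> (\<eta>, \<xi>))" using cont01[OF c2 q] .
  have "integral {0..1} (PhiS f a b \<sigma> (\<eta>, \<xi>)) - integral {0..1} (PhiS f' a b \<sigma> (\<eta>, \<xi>))
      = integral {0..1} (\<lambda>u. PhiS f a b \<sigma> (\<eta>, \<xi>) u - PhiS f' a b \<sigma> (\<eta>, \<xi>) u)"
    using i1 i2 by (simp add: integral_diff integrable_continuous_real)
  also have "\<bar>\<dots>\<bar> \<le> d / 2 * \<xi>^2 / 2"
  proof (rule bnd_int)
    show "continuous_on {0..1} (\<lambda>u. PhiS f a b \<sigma> (\<eta>, \<xi>) u - PhiS f' a b \<sigma> (\<eta>, \<xi>) u)"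
      using i1 i2 by (intro continuous_intros)
    fix u :: real assume u: "u \<in> {0..1}"
    have "PhiS f a b \<sigma> (\<eta>, \<xi>) u - PhiS f' a b \<sigma> (\<eta>, \<xi>) u =
        (f (Xs \<sigma> \<eta> \<xi> u) (\<xi> * u) - f' (Xs \<sigma> \<eta> \<xi> u) (\<xi> * u)) / (2 * u)"
      by (simp add: PhiS_def diff_divide_distrib)
    then show "\<bar>PhiS f a b \<sigma> (\<eta>, \<xi>) u - PhiS f' a b \<sigma> (\<eta>, \<xi>) u\<bar> \<le> d / 2 * \<xi>^2 * u"
      using half_bound[OF u fb[OF u]] by simp
  qed
  finally show ?thesis by simp
qed

lemma contrPhiW:
  assumes q: "(\<eta>, \<xi>) \<in> Dom x1 x2 \<delta>"
    and c1: "continuous_on (Dom x1 x2 \<delta> \<times> {0..1}) (\<lambda>(q, u). PhiW f g \<sigma> q u)"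
    and c2: "continuous_on (Dom x1 x2 \<delta> \<times> {0..1}) (\<lambda>(q, u). PhiW f' g \<sigma> q u)"
    and fb: "\<And>u. u \<in> {0..1} \<Longrightarrow> \<bar>f (Xs \<sigma> \<eta> \<xi> u) (\<xi> * u) - f' (Xs \<sigma> \<eta> \<xi> u) (\<xi> * u)\<bar> \<le> d * (\<xi> * u)^2"
    and d: "0 \<le> d"
  shows "\<bar>integral {0..1} (PhiW f g \<sigma> (\<eta>, \<xi>)) - integral {0..1} (PhiW f' g \<sigma> (\<eta>, \<xi>))\<bar> \<le> \<delta>^2 * d * \<xi>^2"
proof -
  have xi: "0 \<le> \<xi>" "\<xi> \<le> \<delta>" using q by (auto simp: Dom_def)
  have i1: "continuous_on {0..1} (PhiW f g \<sigma> (\<eta>, \<xi>))" using cont01[OF c1 q] .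
  have i2: "continuous_on {0..1} (PhiW f' g \<sigma> (\<eta>, \<xi>))" using cont01[OF c2 q] .
  have "integral {0..1} (PhiW f g \<sigma> (\<eta>, \<xi>)) - integral {0..1} (PhiW f' g \<sigma> (\<eta>, \<xi>))
      = integral {0..1} (\<lambda>u. PhiW f g \<sigma> (\<eta>, \<xi>) u - PhiW f' g \<sigma> (\<eta>, \<xi>) u)"
    using i1 i2 by (simp add: integral_diff integrable_continuous_real)
  also have "\<bar>\<dots>\<bar> \<le> 2 * \<delta>^2 * d * \<xi>^2 / 2"
  proof (rule bnd_int)
    show "continuous_on {0..1} (\<lambda>u. PhiW f g \<sigma> (\<eta>, \<xi>) u - PhiW f' g \<sigma> (\<eta>, \<xi>) u)"
      using i1 i2 by (intro continuous_intros)
    fix u :: real assume u: "u \<in> {0..1}"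
    let ?G = "f (Xs \<sigma> \<eta> \<xi> u) (\<xi> * u) - f' (Xs \<sigma> \<eta> \<xi> u) (\<xi> * u)"
    have e: "PhiW f g \<sigma> (\<eta>, \<xi>) u - PhiW f' g \<sigma> (\<eta>, \<xi>) u = -2 * \<xi>^2 * u * ?G"
      by (simp add: PhiW_def algebra_simps)
    have ts: "(\<xi> * u)^2 \<le> \<delta>^2"
      using mult_right_le_one_le[of \<xi> u] xi u by (intro power_mono) auto
    have "\<bar>?G\<bar> \<le> d * \<delta>^2" using fb[OF u] mult_left_mono[OF ts d] by linarith
    then have "2 * \<xi>^2 * u * \<bar>?G\<bar> \<le> 2 * \<xi>^2 * u * (d * \<delta>^2)" using u by (intro mult_left_mono) auto
    then show "\<bar>PhiW f g \<sigma> (\<eta>, \<xi>) u - PhiW f' g \<sigma> (\<eta>, \<xi>) u\<bar> \<le> 2 * \<delta>^2 * d * \<xi>^2 * u"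
      unfolding e using u by (simp add: abs_mult mult_ac)
  qed
  finally show ?thesis by simp
qed

lemma lin_comb:
  fixes A B C dr ds dw e :: real
  assumes "A \<le> (dr + ds) / 4" "B \<le> (dr + ds) / 4" "C \<le> e" "e \<le> 1/4 * dr" "0 \<le> ds" "0 \<le> dw"
  shows "A + B + C \<le> 3/4 * (dr + ds + dw)"
  using assms by argo

lemma main_fixed:
  fixes x1 x2 K \<delta> M :: real
  assumes x12: "x1 < x2" and dpos: "0 < \<delta>" and dhalf: "\<delta> \<le> 1/2" and MK: "4 * \<bar>K\<bar> + 1 \<le> M"
    and H: "Ck_on 4 x1 x2 U0 \<and> Ck_norm_le 4 x1 x2 U0 K \<and> Ck_on 3 x1 x2 U1 \<and> Ck_norm_le 3 x1 x2 U1 K"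
  shows "(\<forall>r s w. inS x1 x2 \<delta> M r s w \<longrightarrow>
          inS x1 x2 \<delta> M (opR U0 U1 r s) (opS U0 U1 r s) (opW U1 r)) \<and>
      (\<forall>r s w r' s' w'. inS x1 x2 \<delta> M r s w \<longrightarrow> inS x1 x2 \<delta> M r' s' w' \<longrightarrow>
          dS x1 x2 \<delta> (opR U0 U1 r s, opS U0 U1 r s, opW U1 r)
                     (opR U0 U1 r' s', opS U0 U1 r' s', opW U1 r')
            \<le> 3/4 * dS x1 x2 \<delta> (r, s, w) (r', s', w'))"
proof -
  let ?I = "{x1..x2}"
  let ?D = "Dom x1 x2 \<delta>"
  have dU0: "\<And>j x. j < 4 \<Longrightarrow> x \<in> ?I \<Longrightarrow> (U0 j has_real_derivative U0 (Suc j) x) (at x within ?I)"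
    using H unfolding Ck_on_def by blast
  have dU1: "\<And>j x. j < 3 \<Longrightarrow> x \<in> ?I \<Longrightarrow> (U1 j has_real_derivative U1 (Suc j) x) (at x within ?I)"
    using H unfolding Ck_on_def by blast
  have bU0: "\<And>j x. j \<le> 4 \<Longrightarrow> x \<in> ?I \<Longrightarrow> \<bar>U0 j x\<bar> \<le> K"
    using H unfolding Ck_norm_le_def by blast
  have bU1: "\<And>j x. j \<le> 3 \<Longrightarrow> x \<in> ?I \<Longrightarrow> \<bar>U1 j x\<bar> \<le> K"
    using H unfolding Ck_norm_le_def by blast
  have x1I: "x1 \<in> ?I" using x12 by simp
  have K0: "0 \<le> K" using bU1[OF _ x1I, of 0] by simp
  have M0: "0 \<le> M" using MK by simp
  have "(x1, 0) \<in> ?D" using x12 dpos by (simp add: Dom_def)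
  then have Dne: "?D \<noteq> {}" by auto
  have dU0_1: "(U0 1 has_real_derivative U0 2 x) (at x within ?I)" if "x \<in> ?I" for x
    using dU0[of 1 x] that by (simp add: numeral_eq_Suc)
  have dU0_2: "(U0 2 has_real_derivative U0 3 x) (at x within ?I)" if "x \<in> ?I" for x
    using dU0[of 2 x] that by (simp add: numeral_eq_Suc)
  have dU0_3: "(U0 3 has_real_derivative U0 4 x) (at x within ?I)" if "x \<in> ?I" for x
    using dU0[of 3 x] that by (simp add: numeral_eq_Suc)
  have dU1_0: "(U1 0 has_real_derivative U1 1 x) (at x within ?I)" if "x \<in> ?I" for x
    using dU1[of 0 x] that by simp
  have dU1_1: "(U1 1 has_real_derivative U1 2 x) (at x within ?I)" if "x \<in> ?I" for x
    using dU1[of 1 x] that by (simp add: numeral_eq_Suc)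
  have dU1_2: "(U1 2 has_real_derivative U1 3 x) (at x within ?I)" if "x \<in> ?I" for x
    using dU1[of 2 x] that by (simp add: numeral_eq_Suc)
  have cU0_3: "continuous_on ?I (U0 3)" using dU0_3 by (rule DERIV_continuous_on)
  have cU1_1: "continuous_on ?I (U1 1)" using dU1_1 by (rule DERIV_continuous_on)
  have cU1_2: "continuous_on ?I (U1 2)" using dU1_2 by (rule DERIV_continuous_on)
  have lU0_3: "\<bar>U0 3 x - U0 3 y\<bar> \<le> K * \<bar>x - y\<bar>" if "x \<in> ?I" "y \<in> ?I" for x y
    by (rule lip_deriv[OF dU0_3 _ that]) (use bU0 in auto)
  have lU1_2: "\<bar>U1 2 x - U1 2 y\<bar> \<le> K * \<bar>x - y\<bar>" if "x \<in> ?I" "y \<in> ?I" for x y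
    by (rule lip_deriv[OF dU1_2 _ that]) (use bU1 in auto)
  have lU1_1: "\<bar>U1 1 x - U1 1 y\<bar> \<le> K * \<bar>x - y\<bar>" if "x \<in> ?I" "y \<in> ?I" for x y
    by (rule lip_deriv[OF dU1_1 _ that]) (use bU1 in auto)
  have aR: "((\<lambda>x. -2 * U1 1 x) has_real_derivative -2 * U1 2 x) (at x within ?I)" if "x \<in> ?I" for x
    using DERIV_cmult[OF dU1_1[OF that], of "-2"] by simp
  have aS: "((\<lambda>x. 2 * U1 1 x) has_real_derivative 2 * U1 2 x) (at x within ?I)" if "x \<in> ?I" for x
    using DERIV_cmult[OF dU1_1[OF that], of "2"] by simp
  have bR: "((\<lambda>x. -2 * U0 2 x) has_real_derivative -2 * U0 3 x) (at x within ?I)" if "x \<in> ?I" for x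
    using DERIV_cmult[OF dU0_2[OF that], of "-2"] by simp
  have caR: "continuous_on ?I (\<lambda>x. -2 * U1 2 x)" using cU1_2 by (intro continuous_intros)
  have caS: "continuous_on ?I (\<lambda>x. 2 * U1 2 x)" using cU1_2 by (intro continuous_intros)
  have cbR: "continuous_on ?I (\<lambda>x. -2 * U0 3 x)" using cU0_3 by (intro continuous_intros)
  have bndR: "\<bar>-2 * U1 1 x\<bar> \<le> 2 * K \<and> \<bar>-2 * U1 2 x\<bar> \<le> 2 * K \<and> \<bar>-2 * U0 2 x\<bar> \<le> 2 * K \<and> \<bar>-2 * U0 3 x\<bar> \<le> 2 * K"
    if "x \<in> ?I" for x using bU0[of 2 x] bU0[of 3 x] bU1[of 1 x] bU1[of 2 x] that by (simp add: abs_mult)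
  have bndS: "\<bar>2 * U1 1 x\<bar> \<le> 2 * K \<and> \<bar>2 * U1 2 x\<bar> \<le> 2 * K \<and> \<bar>-2 * U0 2 x\<bar> \<le> 2 * K \<and> \<bar>-2 * U0 3 x\<bar> \<le> 2 * K"
    if "x \<in> ?I" for x using bU0[of 2 x] bU0[of 3 x] bU1[of 1 x] bU1[of 2 x] that by (simp add: abs_mult)
  have lipR: "\<bar>-2 * U1 2 x - -2 * U1 2 y\<bar> \<le> 2 * K * \<bar>x - y\<bar> \<and> \<bar>-2 * U0 3 x - -2 * U0 3 y\<bar> \<le> 2 * K * \<bar>x - y\<bar>"
    if "x \<in> ?I" "y \<in> ?I" for x y using lU1_2[OF that] lU0_3[OF that] by auto
  have lipS: "\<bar>2 * U1 2 x - 2 * U1 2 y\<bar> \<le> 2 * K * \<bar>x - y\<bar> \<and> \<bar>-2 * U0 3 x - -2 * U0 3 y\<bar> \<le> 2 * K * \<bar>x - y\<bar>"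
    if "x \<in> ?I" "y \<in> ?I" for x y using lU1_2[OF that] lU0_3[OF that] by auto
  have bndW: "\<bar>U1 0 x\<bar> \<le> K \<and> \<bar>U1 1 x\<bar> \<le> K" if "x \<in> ?I" for x using bU1[OF _ that] by auto
  have CMs: "2 * M / 2 + \<delta> * (2 * K) * (1 + \<delta>) \<le> 2 * M"
  proof -
    have "\<delta> * (1 + \<delta>) \<le> 1/2 * (1 + 1/2)" using dpos dhalf by (intro mult_mono) auto
    then have "\<delta> * (2 * K) * (1 + \<delta>) \<le> 3/2 * K" using K0 mult_right_mono[of "\<delta> * (1 + \<delta>)" "3/4" "2 * K"]
      by (simp add: algebra_simps)
    then show ?thesis using MK K0 by simp
  qed
  have CMw: "M * \<delta>^2 + K \<le> M"
  proof -
    have "\<delta>^2 \<le> (1/2)^2" using dpos dhalf by (intro power_mono) auto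
    then have "M * \<delta>^2 \<le> M * (1/4)" using M0 by (intro mult_left_mono) (auto simp: power2_eq_square)
    then show ?thesis using MK abs_of_nonneg[OF K0] by linarith
  qed
  have sig1: "(1::real) = 1 \<or> (1::real) = -1" by simp
  have sig2: "(-1::real) = 1 \<or> (-1::real) = -1" by simp
  have dsq: "\<delta>^2 \<le> 1/4"
  proof -
    have "\<delta>^2 \<le> (1/2)^2" using dpos dhalf by (intro power_mono) auto
    then show ?thesis by (simp add: power2_eq_square)
  qed
  have facts: "inS1 x1 x2 \<delta> M (\<lambda>\<eta> \<xi>. integral {0..1} (PhiS (\<lambda>x t. r x t - s x t) (\<lambda>x. -2 * U1 1 x) (\<lambda>x. -2 * U0 2 x) 1 (\<eta>, \<xi>))) \<and>
      continuous_on (?D \<times> {0..1}) (\<lambda>(q, u). PhiS (\<lambda>x t. r x t - s x t) (\<lambda>x. -2 * U1 1 x) (\<lambda>x. -2 * U0 2 x) 1 q u)"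
    "inS1 x1 x2 \<delta> M (\<lambda>\<eta> \<xi>. integral {0..1} (PhiS (\<lambda>x t. s x t - r x t) (\<lambda>x. 2 * U1 1 x) (\<lambda>x. -2 * U0 2 x) (-1) (\<eta>, \<xi>))) \<and>
      continuous_on (?D \<times> {0..1}) (\<lambda>(q, u). PhiS (\<lambda>x t. s x t - r x t) (\<lambda>x. 2 * U1 1 x) (\<lambda>x. -2 * U0 2 x) (-1) q u)"
    "inS1 x1 x2 \<delta> M (\<lambda>\<eta> \<xi>. integral {0..1} (PhiW r (U1 0) (-1) (\<eta>, \<xi>))) \<and>
      continuous_on (?D \<times> {0..1}) (\<lambda>(q, u). PhiW r (U1 0) (-1) q u)"
    if rS: "inS1 x1 x2 \<delta> M r" and sS: "inS1 x1 x2 \<delta> M s" for r s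
  proof -
    have fRS: "inS1 x1 x2 \<delta> (2 * M) (\<lambda>x t. r x t - s x t)" by (rule inS1_diff[OF rS sS])
    have fSR: "inS1 x1 x2 \<delta> (2 * M) (\<lambda>x t. s x t - r x t)" by (rule inS1_diff[OF sS rS])
    show "inS1 x1 x2 \<delta> M (\<lambda>\<eta> \<xi>. integral {0..1} (PhiS (\<lambda>x t. r x t - s x t) (\<lambda>x. -2 * U1 1 x) (\<lambda>x. -2 * U0 2 x) 1 (\<eta>, \<xi>))) \<and>
      continuous_on (?D \<times> {0..1}) (\<lambda>(q, u). PhiS (\<lambda>x t. r x t - s x t) (\<lambda>x. -2 * U1 1 x) (\<lambda>x. -2 * U0 2 x) 1 q u)"
      by (rule sing_inS1[OF sig1 fRS aR bR caR cbR bndR lipR CMs])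
    show "inS1 x1 x2 \<delta> M (\<lambda>\<eta> \<xi>. integral {0..1} (PhiS (\<lambda>x t. s x t - r x t) (\<lambda>x. 2 * U1 1 x) (\<lambda>x. -2 * U0 2 x) (-1) (\<eta>, \<xi>))) \<and>
      continuous_on (?D \<times> {0..1}) (\<lambda>(q, u). PhiS (\<lambda>x t. s x t - r x t) (\<lambda>x. 2 * U1 1 x) (\<lambda>x. -2 * U0 2 x) (-1) q u)"
      by (rule sing_inS1[OF sig2 fSR aS bR caS cbR bndS lipS CMs])
    show "inS1 x1 x2 \<delta> M (\<lambda>\<eta> \<xi>. integral {0..1} (PhiW r (U1 0) (-1) (\<eta>, \<xi>))) \<and>
      continuous_on (?D \<times> {0..1}) (\<lambda>(q, u). PhiW r (U1 0) (-1) q u)"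
      by (rule W_inS1[OF sig2 rS M0 dU1_0 cU1_1 bndW lU1_1 CMw])
  qed
  show ?thesis
  proof (intro conjI allI impI)
    fix r s w assume "inS x1 x2 \<delta> M r s w"
    then have rS: "inS1 x1 x2 \<delta> M r" and sS: "inS1 x1 x2 \<delta> M s" by (auto simp: inS_def)
    note F = facts[OF rS sS]
    have "inS1 x1 x2 \<delta> M (opR U0 U1 r s)"
      by (rule inS1_cong[OF _ conjunct1[OF F(1)]]) (simp add: repR[where ?U0.0=U0 and ?U1.0=U1, OF _ rS sS conjunct2[OF F(1)]])
    moreover have "inS1 x1 x2 \<delta> M (opS U0 U1 r s)"
      by (rule inS1_cong[OF _ conjunct1[OF F(2)]]) (simp add: repS[where ?U0.0=U0 and ?U1.0=U1, OF _ rS sS conjunct2[OF F(2)]])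
    moreover have "inS1 x1 x2 \<delta> M (opW U1 r)"
      by (rule inS1_cong[OF _ conjunct1[OF F(3)]]) (simp add: repW[where ?U1.0=U1, OF _ conjunct2[OF F(3)]])
    ultimately show "inS x1 x2 \<delta> M (opR U0 U1 r s) (opS U0 U1 r s) (opW U1 r)" by (simp add: inS_def)
  next
    fix r s w r' s' w' assume A: "inS x1 x2 \<delta> M r s w" and B: "inS x1 x2 \<delta> M r' s' w'"
    then have rS: "inS1 x1 x2 \<delta> M r" and sS: "inS1 x1 x2 \<delta> M s" and wS: "inS1 x1 x2 \<delta> M w"
      and rS': "inS1 x1 x2 \<delta> M r'" and sS': "inS1 x1 x2 \<delta> M s'" and wS': "inS1 x1 x2 \<delta> M w'"
      by (auto simp: inS_def)
    note F = facts[OF rS sS] and F' = facts[OF rS' sS']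
    define dr where "dr = dist1 x1 x2 \<delta> r r'"
    define ds where "ds = dist1 x1 x2 \<delta> s s'"
    define dw where "dw = dist1 x1 x2 \<delta> w w'"
    have dr0: "0 \<le> dr" unfolding dr_def by (rule dist_nonneg[OF rS rS' M0 Dne])
    have ds0: "0 \<le> ds" unfolding ds_def by (rule dist_nonneg[OF sS sS' M0 Dne])
    have dw0: "0 \<le> dw" unfolding dw_def by (rule dist_nonneg[OF wS wS' M0 Dne])
    have pr: "\<bar>r x t - r' x t\<bar> \<le> dr * t^2" if "(x, t) \<in> ?D" for x t
      unfolding dr_def by (rule dist_le[OF rS rS' M0 that])
    have ps: "\<bar>s x t - s' x t\<bar> \<le> ds * t^2" if "(x, t) \<in> ?D" for x t
      unfolding ds_def by (rule dist_le[OF sS sS' M0 that])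
    have tri: "\<bar>(a - b) - (c - d)\<bar> \<le> \<bar>a - c\<bar> + \<bar>b - d\<bar>" for a b c d :: real by arith
    have hR: "dist1 x1 x2 \<delta> (opR U0 U1 r s) (opR U0 U1 r' s') \<le> (dr + ds) / 4"
    proof (rule dist_least[OF Dne])
      show "0 \<le> (dr + ds) / 4" using dr0 ds0 by simp
      fix x t assume xt: "(x, t) \<in> ?D"
      have "\<bar>opR U0 U1 r s x t - opR U0 U1 r' s' x t\<bar> \<le> (dr + ds) / 4 * t^2"
        unfolding repR[where ?U0.0=U0 and ?U1.0=U1, OF xt rS sS conjunct2[OF F(1)]] repR[where ?U0.0=U0 and ?U1.0=U1, OF xt rS' sS' conjunct2[OF F'(1)]]
      proof (rule contrPhiS[OF xt conjunct2[OF F(1)] conjunct2[OF F'(1)]])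
        fix u :: real assume u: "u \<in> {0..1}"
        have m: "(Xs 1 x t u, t * u) \<in> ?D" by (rule Xs_in[OF sig1 xt u])
        show "\<bar>(r (Xs 1 x t u) (t * u) - s (Xs 1 x t u) (t * u)) - (r' (Xs 1 x t u) (t * u) - s' (Xs 1 x t u) (t * u))\<bar>
            \<le> (dr + ds) * (t * u)^2"
          using tri[of "r (Xs 1 x t u) (t * u)" "s (Xs 1 x t u) (t * u)" "r' (Xs 1 x t u) (t * u)" "s' (Xs 1 x t u) (t * u)"]
            pr[OF m] ps[OF m] distrib_right[of dr ds "(t * u)^2"] by linarith
      qed
      then show "\<bar>opR U0 U1 r s x t - opR U0 U1 r' s' x t\<bar> \<le> (dr + ds) / 4 * t^2" .
    qed
    have hS: "dist1 x1 x2 \<delta> (opS U0 U1 r s) (opS U0 U1 r' s') \<le> (dr + ds) / 4"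
    proof (rule dist_least[OF Dne])
      show "0 \<le> (dr + ds) / 4" using dr0 ds0 by simp
      fix x t assume xt: "(x, t) \<in> ?D"
      have "\<bar>opS U0 U1 r s x t - opS U0 U1 r' s' x t\<bar> \<le> (dr + ds) / 4 * t^2"
        unfolding repS[where ?U0.0=U0 and ?U1.0=U1, OF xt rS sS conjunct2[OF F(2)]] repS[where ?U0.0=U0 and ?U1.0=U1, OF xt rS' sS' conjunct2[OF F'(2)]]
      proof (rule contrPhiS[OF xt conjunct2[OF F(2)] conjunct2[OF F'(2)]])
        fix u :: real assume u: "u \<in> {0..1}"
        have m: "(Xs (-1) x t u, t * u) \<in> ?D" by (rule Xs_in[OF sig2 xt u])
        show "\<bar>(s (Xs (-1) x t u) (t * u) - r (Xs (-1) x t u) (t * u)) - (s' (Xs (-1) x t u) (t * u) - r' (Xs (-1) x t u) (t * u))\<bar>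
            \<le> (dr + ds) * (t * u)^2"
          using tri[of "s (Xs (-1) x t u) (t * u)" "r (Xs (-1) x t u) (t * u)" "s' (Xs (-1) x t u) (t * u)" "r' (Xs (-1) x t u) (t * u)"]
            pr[OF m] ps[OF m] distrib_right[of dr ds "(t * u)^2"] by linarith
      qed
      then show "\<bar>opS U0 U1 r s x t - opS U0 U1 r' s' x t\<bar> \<le> (dr + ds) / 4 * t^2" .
    qed
    have hW: "dist1 x1 x2 \<delta> (opW U1 r) (opW U1 r') \<le> \<delta>^2 * dr"
    proof (rule dist_least[OF Dne])
      show "0 \<le> \<delta>^2 * dr" using dr0 by simp
      fix x t assume xt: "(x, t) \<in> ?D"
      have "\<bar>opW U1 r x t - opW U1 r' x t\<bar> \<le> \<delta>^2 * dr * t^2"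
        unfolding repW[where ?U1.0=U1, OF xt conjunct2[OF F(3)]] repW[where ?U1.0=U1, OF xt conjunct2[OF F'(3)]]
      proof (rule contrPhiW[OF xt conjunct2[OF F(3)] conjunct2[OF F'(3)] _ dr0])
        fix u :: real assume u: "u \<in> {0..1}"
        have m: "(Xs (-1) x t u, t * u) \<in> ?D" by (rule Xs_in[OF sig2 xt u])
        show "\<bar>r (Xs (-1) x t u) (t * u) - r' (Xs (-1) x t u) (t * u)\<bar> \<le> dr * (t * u)^2"
          using pr[OF m] .
      qed
      then show "\<bar>opW U1 r x t - opW U1 r' x t\<bar> \<le> \<delta>^2 * dr * t^2" .
    qed
    have "\<delta>^2 * dr \<le> 1/4 * dr" using dsq dr0 by (intro mult_right_mono) auto
    show "dS x1 x2 \<delta> (opR U0 U1 r s, opS U0 U1 r s, opW U1 r)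
                     (opR U0 U1 r' s', opS U0 U1 r' s', opW U1 r')
            \<le> 3/4 * dS x1 x2 \<delta> (r, s, w) (r', s', w')"
    proof -
      have e1: "dS x1 x2 \<delta> (opR U0 U1 r s, opS U0 U1 r s, opW U1 r) (opR U0 U1 r' s', opS U0 U1 r' s', opW U1 r')
        = dist1 x1 x2 \<delta> (opR U0 U1 r s) (opR U0 U1 r' s') + dist1 x1 x2 \<delta> (opS U0 U1 r s) (opS U0 U1 r' s')
          + dist1 x1 x2 \<delta> (opW U1 r) (opW U1 r')" by (simp add: dS_def)
      have e2: "dS x1 x2 \<delta> (r, s, w) (r', s', w') = dr + ds + dw" by (simp add: dS_def dr_def ds_def dw_def)
      show ?thesis unfolding e1 e2
        by (rule lin_comb[OF hR hS hW \<open>\<delta>^2 * dr \<le> 1/4 * dr\<close> ds0 dw0])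
    qed
  qed
qed

theorem lemmaA1:
  fixes x1 x2 K :: real
  assumes "x1 < x2"
  shows "\<exists>\<delta> M \<nu>. 0 < \<delta> \<and> \<delta> \<le> root 3 (3 * (x2 - x1) / 4) \<and> 0 < M \<and> 0 < \<nu> \<and> \<nu> < 1 \<and>
    (\<forall>U0 U1. Ck_on 4 x1 x2 U0 \<and> Ck_norm_le 4 x1 x2 U0 K \<and>
              Ck_on 3 x1 x2 U1 \<and> Ck_norm_le 3 x1 x2 U1 K \<longrightarrow>
      (\<forall>r s w. inS x1 x2 \<delta> M r s w \<longrightarrow>
          inS x1 x2 \<delta> M (opR U0 U1 r s) (opS U0 U1 r s) (opW U1 r)) \<and>
      (\<forall>r s w r' s' w'. inS x1 x2 \<delta> M r s w \<longrightarrow> inS x1 x2 \<delta> M r' s' w' \<longrightarrow>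
          dS x1 x2 \<delta> (opR U0 U1 r s, opS U0 U1 r s, opW U1 r)
                     (opR U0 U1 r' s', opS U0 U1 r' s', opW U1 r')
            \<le> \<nu> * dS x1 x2 \<delta> (r, s, w) (r', s', w')))"
proof -
  define \<delta> where "\<delta> = min (1/2) (root 3 (3 * (x2 - x1) / 4))"
  define M where "M = 4 * \<bar>K\<bar> + 1"
  have r0: "0 < root 3 (3 * (x2 - x1) / 4)" using assms by simp
  have dpos: "0 < \<delta>" using r0 by (simp add: \<delta>_def)
  have dle: "\<delta> \<le> root 3 (3 * (x2 - x1) / 4)" by (simp add: \<delta>_def)
  have dhalf: "\<delta> \<le> 1/2" by (simp add: \<delta>_def)
  have Mpos: "0 < M" by (simp add: M_def)
  have MK: "4 * \<bar>K\<bar> + 1 \<le> M" by (simp add: M_def)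
  have all: "\<forall>U0 U1. Ck_on 4 x1 x2 U0 \<and> Ck_norm_le 4 x1 x2 U0 K \<and>
              Ck_on 3 x1 x2 U1 \<and> Ck_norm_le 3 x1 x2 U1 K \<longrightarrow>
      (\<forall>r s w. inS x1 x2 \<delta> M r s w \<longrightarrow>
          inS x1 x2 \<delta> M (opR U0 U1 r s) (opS U0 U1 r s) (opW U1 r)) \<and>
      (\<forall>r s w r' s' w'. inS x1 x2 \<delta> M r s w \<longrightarrow> inS x1 x2 \<delta> M r' s' w' \<longrightarrow>
          dS x1 x2 \<delta> (opR U0 U1 r s, opS U0 U1 r s, opW U1 r)
                     (opR U0 U1 r' s', opS U0 U1 r' s', opW U1 r')
            \<le> 3/4 * dS x1 x2 \<delta> (r, s, w) (r', s', w'))"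
  proof (intro allI impI)
    fix U0 U1 assume H: "Ck_on 4 x1 x2 U0 \<and> Ck_norm_le 4 x1 x2 U0 K \<and> Ck_on 3 x1 x2 U1 \<and> Ck_norm_le 3 x1 x2 U1 K"
    show "(\<forall>r s w. inS x1 x2 \<delta> M r s w \<longrightarrow>
          inS x1 x2 \<delta> M (opR U0 U1 r s) (opS U0 U1 r s) (opW U1 r)) \<and>
      (\<forall>r s w r' s' w'. inS x1 x2 \<delta> M r s w \<longrightarrow> inS x1 x2 \<delta> M r' s' w' \<longrightarrow>
          dS x1 x2 \<delta> (opR U0 U1 r s, opS U0 U1 r s, opW U1 r)
                     (opR U0 U1 r' s', opS U0 U1 r' s', opW U1 r')
            \<le> 3/4 * dS x1 x2 \<delta> (r, s, w) (r', s', w'))"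
      by (rule main_fixed[OF assms dpos dhalf MK H])
  qed
  have c: "0 < (3/4::real)" "(3/4::real) < 1" by simp_all
  show ?thesis
    by (rule exI[of _ \<delta>], rule exI[of _ M], rule exI[of _ "3/4"]) (use dpos dle Mpos c all in blast)
qed


end
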